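(* Let $E$ be a finite set, let $d\in\mathbb{N}$, and for each $\alpha\in\mathbb{Z}^E$ let $M_\alpha$ be a matroid on $E$ of rank $d$. The following are equivalent: (1) the map $M:\alpha\mapsto M_\alpha$ is a matroid flock (of rank $d$ on $E$); (2) there is a matroid valuation $\nu:\binom{E}{d}\to\mathbb{Z}\cup\{\infty\}$ such that $M_\alpha=M^\nu_\alpha$ for all $\alpha\in\mathbb{Z}^E$.
   Context: For $I\subseteq E$, $e_I:=\sum_{i\in I}e_i\in\mathbb{Z}^E$ (with $e_i$ the $i$-th unit vector) and $\mathbf{1}:=e_E$ is the all-one vector. For a matroid $N$ on $E$ and $i\in E$, $N\setminus i$ and $N/i$ denote deletion and contraction. A matroid flock of rank $d$ on $E$ is a map $M$ assigning to each $\alpha\in\mathbb{Z}^E$ a matroid $M_\alpha$ on $E$ of rank $d$ such that (MF1) $M_\alpha/i=M_{\alpha+e_i}\setminus i$ for all $\alpha\in\mathbb{Z}^E$, $i\in E$; and (MF2) $M_\alpha=M_{\alpha+\mathbf{1}}$ for all $\alpha\in\mathbb{Z}^E$. Write $\binom{E}{d}$ for the set of $d$-subsets of $E$. A matroid valuation is a function $\nu:\binom{E}{d}\to\mathbb{R}\cup\{\infty\}$ such that (V1) $\nu(B)<\infty$ for some $B$; and (V2) for all $B,B'\in\binom{E}{d}$ and $i\in B\setminus B'$ there is $j\in B'\setminus B$ with $\nu(B)+\nu(B')\ge \nu(B-i+j)+\nu(B'+i-j)$, where $B-i+j:=(B\cup\{j\})\setminus\{i\}$. For $\alpha\in\mathbb{R}^E$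 let $g^\nu(\alpha):=\sup\{e_{B'}^T\alpha-\nu(B'):B'\in\binom{E}{d}\}$, $\mathcal{B}^\nu_\alpha:=\{B\in\binom{E}{d}: e_B^T\alpha-\nu(B)=g^\nu(\alpha)\}$, and $M^\nu_\alpha:=(E,\mathcal{B}^\nu_\alpha)$ (the matroid with basis set $\mathcal{B}^\nu_\alpha$). *)

theory Defs
  imports "HOL-Library.Extended_Real"
begin

text \<open>A matroid on the ground set E is represented by its set of bases.\<close>
definition matroid_bases :: "'a set \<Rightarrow> 'a set set \<Rightarrow> bool" where
  "matroid_bases E Bs \<longleftrightarrow> Bs \<noteq> {} \<and> (\<forall>B\<in>Bs. B \<subseteq> E) \<and>
     (\<forall>B\<in>Bs. \<forall>B'\<in>Bs. \<forall>x\<in>B - B'. \<exists>y\<in>B' - B. insert y (B - {x}) \<in> Bs)"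

definition matroid_of_rank :: "'a set \<Rightarrow> nat \<Rightarrow> 'a set set \<Rightarrow> bool" where
  "matroid_of_rank E d Bs \<longleftrightarrow> matroid_bases E Bs \<and> (\<forall>B\<in>Bs. card B = d)"

definition mdelete :: "'a set set \<Rightarrow> 'a \<Rightarrow> 'a set set" where
  "mdelete Bs i = (if \<exists>B\<in>Bs. i \<notin> B then {B\<in>Bs. i \<notin> B} else (\<lambda>B. B - {i}) ` Bs)"

definition mcontract :: "'a set set \<Rightarrow> 'a \<Rightarrow> 'a set set" where
  "mcontract Bs i = (if \<exists>B\<in>Bs. i \<in> B then (\<lambda>B. B - {i}) ` {B\<in>Bs. i \<in> B} else Bs)"

text \<open>Integer vectors indexed by E (functions vanishing outside E).\<close>
definition zvec :: "'a set \<Rightarrow> ('a \<Rightarrow> int) set" where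
  "zvec E = {\<alpha>. \<forall>x. x \<notin> E \<longrightarrow> \<alpha> x = 0}"

definition unitvec :: "'a set \<Rightarrow> ('a \<Rightarrow> int)" where
  "unitvec I = (\<lambda>x. if x \<in> I then 1 else 0)"

definition matroid_flock :: "'a set \<Rightarrow> nat \<Rightarrow> (('a \<Rightarrow> int) \<Rightarrow> 'a set set) \<Rightarrow> bool" where
  "matroid_flock E d M \<longleftrightarrow>
     (\<forall>\<alpha>\<in>zvec E. matroid_of_rank E d (M \<alpha>)) \<and>
     (\<forall>\<alpha>\<in>zvec E. \<forall>i\<in>E. mcontract (M \<alpha>) i = mdelete (M (\<lambda>x. \<alpha> x + unitvec {i} x)) i) \<and>
     (\<forall>\<alpha>\<in>zvec E. M \<alpha> = M (\<lambda>x. \<alpha> x + unitvec E x))"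

definition dsubsets :: "'a set \<Rightarrow> nat \<Rightarrow> 'a set set" where
  "dsubsets E d = {B. B \<subseteq> E \<and> card B = d}"

definition matroid_valuation :: "'a set \<Rightarrow> nat \<Rightarrow> ('a set \<Rightarrow> ereal) \<Rightarrow> bool" where
  "matroid_valuation E d \<nu> \<longleftrightarrow>
     (\<forall>B\<in>dsubsets E d. \<nu> B \<noteq> -\<infinity>) \<and>
     (\<exists>B\<in>dsubsets E d. \<nu> B < \<infinity>) \<and>
     (\<forall>B\<in>dsubsets E d. \<forall>B'\<in>dsubsets E d. \<forall>i\<in>B - B'. \<exists>j\<in>B' - B.
        \<nu> B + \<nu> B' \<ge> \<nu> (insert j (B - {i})) + \<nu> (insert i B' - {j}))"

definition gval :: "'a set \<Rightarrow> nat \<Rightarrow> ('a set \<Rightarrow> ereal) \<Rightarrow> ('a \<Rightarrow> real) \<Rightarrow> ereal" where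
  "gval E d \<nu> \<alpha> = (SUP B'\<in>dsubsets E d. ereal (\<Sum>i\<in>B'. \<alpha> i) - \<nu> B')"

definition val_bases :: "'a set \<Rightarrow> nat \<Rightarrow> ('a set \<Rightarrow> ereal) \<Rightarrow> ('a \<Rightarrow> real) \<Rightarrow> 'a set set" where
  "val_bases E d \<nu> \<alpha> = {B\<in>dsubsets E d. ereal (\<Sum>i\<in>B. \<alpha> i) - \<nu> B = gval E d \<nu> \<alpha>}"

end

theory Submission
  imports Defs
begin

lemma plus_unit: "(\<lambda>x. \<alpha> x + unitvec {i} x) = \<alpha>(i := \<alpha> i + 1)"
  by (auto simp: unitvec_def fun_eq_iff)

lemma plus_unitE: "(\<lambda>x. \<alpha> x + unitvec E x) = (\<lambda>x. \<alpha> x + (if x \<in> E then 1 else 0))"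
  by (auto simp: unitvec_def fun_eq_iff)

lemma zvec_upd: "\<alpha> \<in> zvec E \<Longrightarrow> i \<in> E \<Longrightarrow> \<alpha>(i := c) \<in> zvec E"
  by (auto simp: zvec_def)

lemma mrank_basis: "matroid_of_rank E d Bs \<Longrightarrow> B \<in> Bs \<Longrightarrow> B \<subseteq> E \<and> card B = d"
  by (auto simp: matroid_of_rank_def matroid_bases_def)

lemma mrank_ne: "matroid_of_rank E d Bs \<Longrightarrow> Bs \<noteq> {}"
  by (auto simp: matroid_of_rank_def matroid_bases_def)

locale flk =
  fixes E :: "'a set" and d :: nat and M :: "('a \<Rightarrow> int) \<Rightarrow> 'a set set"
  assumes finE: "finite E"
    and mat: "\<And>\<alpha>. \<alpha> \<in> zvec E \<Longrightarrow> matroid_of_rank E d (M \<alpha>)"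
    and mf1: "\<And>\<alpha> i. \<alpha> \<in> zvec E \<Longrightarrow> i \<in> E \<Longrightarrow> mcontract (M \<alpha>) i = mdelete (M (\<alpha>(i := \<alpha> i + 1))) i"
begin

lemma bas: "\<alpha> \<in> zvec E \<Longrightarrow> B \<in> M \<alpha> \<Longrightarrow> B \<subseteq> E \<and> card B = d \<and> finite B"
  using mrank_basis[OF mat] finE by (meson finite_subset)

lemma nonempty: "\<alpha> \<in> zvec E \<Longrightarrow> M \<alpha> \<noteq> {}"
  using mrank_ne[OF mat] by blast

lemma P1:
  assumes a: "\<alpha> \<in> zvec E" and i: "i \<in> E" and nl: "\<exists>B\<in>M \<alpha>. i \<in> B"
  shows "M (\<alpha>(i := \<alpha> i + 1)) = {B\<in>M \<alpha>. i \<in> B}"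
proof -
  let ?N = "M \<alpha>" and ?N' = "M (\<alpha>(i := \<alpha> i + 1))"
  have a': "\<alpha>(i := \<alpha> i + 1) \<in> zvec E" using zvec_upd[OF a i] .
  have mc: "mcontract ?N i = (\<lambda>B. B - {i}) ` {B\<in>?N. i \<in> B}" using nl by (simp add: mcontract_def)
  from nl obtain B0 where B0: "B0 \<in> ?N" "i \<in> B0" by blast
  have cB0: "card (B0 - {i}) = d - 1" using bas[OF a B0(1)] B0 by auto
  have d1: "d \<ge> 1" using bas[OF a B0(1)] B0 by (metis One_nat_def Suc_leI card_gt_0_iff empty_iff)
  have all: "\<forall>B\<in>?N'. i \<in> B"
  proof (rule ccontr)
    assume "\<not> (\<forall>B\<in>?N'. i \<in> B)"
    then have "mdelete ?N' i = {B\<in>?N'. i \<notin> B}" by (auto simp: mdelete_def)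
    moreover have "B0 - {i} \<in> mcontract ?N i" using mc B0 by auto
    ultimately have "B0 - {i} \<in> ?N'" using mf1[OF a i] by auto
    then have "card (B0 - {i}) = d" using bas[OF a'] by blast
    then show False using cB0 d1 by auto
  qed
  then have md: "mdelete ?N' i = (\<lambda>B. B - {i}) ` ?N'" by (auto simp: mdelete_def)
  have eq: "(\<lambda>B. B - {i}) ` ?N' = (\<lambda>B. B - {i}) ` {B\<in>?N. i \<in> B}" using mf1[OF a i] mc md by simp
  show ?thesis
  proof (intro set_eqI iffI)
    fix B assume B: "B \<in> ?N'"
    then have "B - {i} \<in> (\<lambda>B. B - {i}) ` {B\<in>?N. i \<in> B}" using eq by blast
    then obtain C where C: "C \<in> ?N" "i \<in> C" "B - {i} = C - {i}" by auto
    have "B = C" using C all B by (metis insert_Diff)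
    then show "B \<in> {B\<in>?N. i \<in> B}" using C by auto
  next
    fix B assume B: "B \<in> {B\<in>?N. i \<in> B}"
    then have "B - {i} \<in> (\<lambda>B. B - {i}) ` ?N'" using eq by blast
    then obtain C where C: "C \<in> ?N'" "B - {i} = C - {i}" by auto
    have "B = C" using C all B by (metis (mono_tags, lifting) insert_Diff mem_Collect_eq)
    then show "B \<in> ?N'" using C by auto
  qed
qed

lemma P2:
  assumes a: "\<alpha> \<in> zvec E" and i: "i \<in> E" and nl: "\<not> (\<exists>B\<in>M \<alpha>. i \<in> B)"
  shows "M \<alpha> = {B\<in>M (\<alpha>(i := \<alpha> i + 1)). i \<notin> B}"
proof -
  let ?N = "M \<alpha>" and ?N' = "M (\<alpha>(i := \<alpha> i + 1))"
  have a': "\<alpha>(i := \<alpha> i + 1) \<in> zvec E" using zvec_upd[OF a i] .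
  have mc: "mcontract ?N i = ?N" using nl by (simp add: mcontract_def)
  show ?thesis
  proof (cases "\<exists>B\<in>?N'. i \<notin> B")
    case True
    then show ?thesis using mf1[OF a i] mc by (simp add: mdelete_def)
  next
    case False
    then have md: "mdelete ?N' i = (\<lambda>B. B - {i}) ` ?N'" by (auto simp: mdelete_def)
    obtain B0 where B0: "B0 \<in> ?N" using nonempty[OF a] by blast
    then have "B0 \<in> (\<lambda>B. B - {i}) ` ?N'" using mf1[OF a i] mc md by simp
    then obtain C where C: "C \<in> ?N'" "B0 = C - {i}" by auto
    have "i \<in> C" using C False by blast
    then have "card B0 = card C - 1" using C bas[OF a' C(1)] by simp
    moreover have "card C \<ge> 1" using \<open>i \<in> C\<close> bas[OF a' C(1)]
      by (metis One_nat_def Suc_leI card_gt_0_iff empty_iff)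
    ultimately show ?thesis using bas[OF a B0] bas[OF a' C(1)] by simp
  qed
qed

definition nl :: "('a \<Rightarrow> int) \<Rightarrow> 'a \<Rightarrow> bool" where
  "nl \<alpha> i \<longleftrightarrow> (\<exists>B\<in>M \<alpha>. i \<in> B)"

definition rk :: "('a \<Rightarrow> int) \<Rightarrow> 'a \<Rightarrow> int" where
  "rk \<alpha> i = (if nl \<alpha> i then 1 else 0)"

lemma sq_loops:
  assumes a: "\<alpha> \<in> zvec E" and i: "i \<in> E" and j: "j \<in> E" and ij: "i \<noteq> j"
    and ni: "\<not> nl \<alpha> i" and nj: "\<not> nl \<alpha> j"
    and h: "nl (\<alpha>(i := \<alpha> i + 1)) j"
  shows "nl (\<alpha>(j := \<alpha> j + 1)) i"
proof (rule ccontr)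
  let ?ai = "\<alpha>(i := \<alpha> i + 1)" and ?aj = "\<alpha>(j := \<alpha> j + 1)"
  have ai: "?ai \<in> zvec E" using zvec_upd[OF a i] .
  have aj: "?aj \<in> zvec E" using zvec_upd[OF a j] .
  have comm: "?ai(j := ?ai j + 1) = ?aj(i := ?aj i + 1)" using ij by (auto simp: fun_eq_iff)
  have Pi: "M \<alpha> = {B\<in>M ?ai. i \<notin> B}" using P2 a i ni nl_def by blast
  assume h2: "\<not> nl ?aj i"
  have Q1: "M (?ai(j := ?ai j + 1)) = {B\<in>M ?ai. j \<in> B}" using P1 ai j h nl_def by blast
  have Q2: "M ?aj = {B\<in>M (?aj(i := ?aj i + 1)). i \<notin> B}" using P2 aj i h2 nl_def by blast
  obtain B where B: "B \<in> M ?aj" using nonempty[OF aj] by blast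
  have "B \<in> M ?ai" "j \<in> B" "i \<notin> B" using B Q1 Q2 comm by auto
  then have "B \<in> M \<alpha>" using Pi by auto
  then show False using nj \<open>j \<in> B\<close> by (auto simp: nl_def)
qed

lemma square:
  assumes a: "\<alpha> \<in> zvec E" and i: "i \<in> E" and j: "j \<in> E"
  shows "rk \<alpha> i + rk (\<alpha>(i := \<alpha> i + 1)) j = rk \<alpha> j + rk (\<alpha>(j := \<alpha> j + 1)) i"
proof (cases "i = j")
  case True then show ?thesis by simp
next
  case ij: False
  let ?ai = "\<alpha>(i := \<alpha> i + 1)" and ?aj = "\<alpha>(j := \<alpha> j + 1)"
  have ai: "?ai \<in> zvec E" using zvec_upd[OF a i] .
  have aj: "?aj \<in> zvec E" using zvec_upd[OF a j] .
  have comm: "?ai(j := ?ai j + 1) = ?aj(i := ?aj i + 1)" using ij by (auto simp: fun_eq_iff)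
  show ?thesis
  proof (cases "nl \<alpha> i"; cases "nl \<alpha> j")
    assume ni: "nl \<alpha> i" and nj: "nl \<alpha> j"
    have "M ?ai = {B\<in>M \<alpha>. i \<in> B}" using P1 a i ni nl_def by blast
    moreover have "M ?aj = {B\<in>M \<alpha>. j \<in> B}" using P1 a j nj nl_def by blast
    ultimately have "nl ?ai j = nl ?aj i" by (auto simp: nl_def)
    then show ?thesis using ni nj by (simp add: rk_def)
  next
    assume ni: "nl \<alpha> i" and nj: "\<not> nl \<alpha> j"
    have "M ?ai = {B\<in>M \<alpha>. i \<in> B}" using P1 a i ni nl_def by blast
    then have 1: "\<not> nl ?ai j" using nj by (auto simp: nl_def)
    have "M \<alpha> = {B\<in>M ?aj. j \<notin> B}" using P2 a j nj nl_def by blast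
    then have 2: "nl ?aj i" using ni by (auto simp: nl_def)
    show ?thesis using ni nj 1 2 by (simp add: rk_def)
  next
    assume ni: "\<not> nl \<alpha> i" and nj: "nl \<alpha> j"
    have "M ?aj = {B\<in>M \<alpha>. j \<in> B}" using P1 a j nj nl_def by blast
    then have 1: "\<not> nl ?aj i" using ni by (auto simp: nl_def)
    have "M \<alpha> = {B\<in>M ?ai. i \<notin> B}" using P2 a i ni nl_def by blast
    then have 2: "nl ?ai j" using nj by (auto simp: nl_def)
    show ?thesis using ni nj 1 2 by (simp add: rk_def)
  next
    assume ni: "\<not> nl \<alpha> i" and nj: "\<not> nl \<alpha> j"
    have Pi: "M \<alpha> = {B\<in>M ?ai. i \<notin> B}" using P2 a i ni nl_def by blast
    have Pj: "M \<alpha> = {B\<in>M ?aj. j \<notin> B}" using P2 a j nj nl_def by blast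
    have "nl ?ai j = nl ?aj i"
      using sq_loops[OF a i j ij ni nj] sq_loops[OF a j i _ nj ni] ij by (auto simp: fun_upd_twist)
    then show ?thesis using ni nj by (simp add: rk_def)
  qed
qed
end

definition up :: "('a \<Rightarrow> int) \<Rightarrow> 'a \<Rightarrow> ('a \<Rightarrow> int)" where "up \<alpha> i = \<alpha>(i := \<alpha> i + 1)"
definition dn :: "('a \<Rightarrow> int) \<Rightarrow> 'a \<Rightarrow> ('a \<Rightarrow> int)" where "dn \<alpha> i = \<alpha>(i := \<alpha> i - 1)"

lemma up_dn[simp]: "up (dn \<alpha> i) i = \<alpha>" and dn_up[simp]: "dn (up \<alpha> i) i = \<alpha>"
  by (auto simp: up_def dn_def fun_eq_iff)
lemma up_app: "up \<alpha> i j = (if j = i then \<alpha> i + 1 else \<alpha> j)"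
  and dn_app: "dn \<alpha> i j = (if j = i then \<alpha> i - 1 else \<alpha> j)"
  by (auto simp: up_def dn_def)
lemma up_comm: "up (up \<alpha> i) j = up (up \<alpha> j) i"
  and updn_comm: "i \<noteq> j \<Longrightarrow> up (dn \<alpha> j) i = dn (up \<alpha> i) j"
  by (auto simp: up_def dn_def fun_eq_iff)
lemma zvec_up: "\<alpha> \<in> zvec E \<Longrightarrow> i \<in> E \<Longrightarrow> up \<alpha> i \<in> zvec E"
  and zvec_dn: "\<alpha> \<in> zvec E \<Longrightarrow> i \<in> E \<Longrightarrow> dn \<alpha> i \<in> zvec E"
  by (auto simp: zvec_def up_def dn_def)

definition nrm :: "'a set \<Rightarrow> ('a \<Rightarrow> int) \<Rightarrow> int" where
  "nrm E \<alpha> = (\<Sum>x\<in>E. \<bar>\<alpha> x\<bar>)"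

lemma nrm_upd: "finite E \<Longrightarrow> i \<in> E \<Longrightarrow> nrm E (\<alpha>(i := c)) = nrm E \<alpha> - \<bar>\<alpha> i\<bar> + \<bar>c\<bar>"
proof -
  assume f: "finite E" and i: "i \<in> E"
  have "nrm E (\<alpha>(i := c)) = \<bar>c\<bar> + (\<Sum>x\<in>E - {i}. \<bar>\<alpha> x\<bar>)"
    unfolding nrm_def using sum.remove[OF f i, of "\<lambda>x. \<bar>(\<alpha>(i := c)) x\<bar>"] by simp
  moreover have "nrm E \<alpha> = \<bar>\<alpha> i\<bar> + (\<Sum>x\<in>E - {i}. \<bar>\<alpha> x\<bar>)"
    unfolding nrm_def using sum.remove[OF f i] by simp
  ultimately show ?thesis by simp
qed

lemma nrm_up: "finite E \<Longrightarrow> i \<in> E \<Longrightarrow> nrm E (up \<alpha> i) = nrm E \<alpha> - \<bar>\<alpha> i\<bar> + \<bar>\<alpha> i + 1\<bar>"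
  and nrm_dn: "finite E \<Longrightarrow> i \<in> E \<Longrightarrow> nrm E (dn \<alpha> i) = nrm E \<alpha> - \<bar>\<alpha> i\<bar> + \<bar>\<alpha> i - 1\<bar>"
  by (simp_all add: up_def dn_def nrm_upd)

lemma nrm_nonneg: "nrm E \<alpha> \<ge> 0" by (simp add: nrm_def sum_nonneg)

definition pch :: "'a set \<Rightarrow> ('a \<Rightarrow> int) \<Rightarrow> 'a" where
  "pch E \<alpha> = (SOME i. i \<in> E \<and> \<alpha> i \<noteq> 0)"

lemma pch: "\<exists>i\<in>E. \<alpha> i \<noteq> 0 \<Longrightarrow> pch E \<alpha> \<in> E \<and> \<alpha> (pch E \<alpha>) \<noteq> 0"
  unfolding pch_def by (rule someI_ex) blast

lemma term_dn: assumes f: "finite E" and ex: "\<exists>i\<in>E. \<alpha> i \<noteq> 0" and pos: "\<alpha> (pch E \<alpha>) > 0"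
  shows "nat (nrm E (dn \<alpha> (pch E \<alpha>))) < nat (nrm E \<alpha>)"
proof -
  have p: "pch E \<alpha> \<in> E" using pch[OF ex] by simp
  have "\<bar>\<alpha> (pch E \<alpha>) - 1\<bar> = \<bar>\<alpha> (pch E \<alpha>)\<bar> - 1" using pos by linarith
  then have "nrm E (dn \<alpha> (pch E \<alpha>)) = nrm E \<alpha> - 1" using nrm_dn[OF f p, of \<alpha>] by simp
  then show ?thesis using nrm_nonneg[of E "dn \<alpha> (pch E \<alpha>)"] by simp
qed

lemma term_up: assumes f: "finite E" and ex: "\<exists>i\<in>E. \<alpha> i \<noteq> 0" and neg: "\<not> \<alpha> (pch E \<alpha>) > 0"
  shows "nat (nrm E (up \<alpha> (pch E \<alpha>))) < nat (nrm E \<alpha>)"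
proof -
  have p: "pch E \<alpha> \<in> E" "\<alpha> (pch E \<alpha>) \<noteq> 0" using pch[OF ex] by simp_all
  have n: "\<alpha> (pch E \<alpha>) < 0" using neg p(2) by linarith
  have "\<bar>\<alpha> (pch E \<alpha>) + 1\<bar> = \<bar>\<alpha> (pch E \<alpha>)\<bar> - 1" using n by linarith
  then have "nrm E (up \<alpha> (pch E \<alpha>)) = nrm E \<alpha> - 1" using nrm_up[OF f p(1), of \<alpha>] by simp
  then show ?thesis using nrm_nonneg[of E "up \<alpha> (pch E \<alpha>)"] by simp
qed

function pot :: "'a set \<Rightarrow> (('a \<Rightarrow> int) \<Rightarrow> 'a \<Rightarrow> int) \<Rightarrow> ('a \<Rightarrow> int) \<Rightarrow> int" where
  "pot E r \<alpha> = (if finite E \<and> (\<exists>i\<in>E. \<alpha> i \<noteq> 0) then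
     (if \<alpha> (pch E \<alpha>) > 0 then pot E r (dn \<alpha> (pch E \<alpha>)) + r (dn \<alpha> (pch E \<alpha>)) (pch E \<alpha>)
      else pot E r (up \<alpha> (pch E \<alpha>)) - r \<alpha> (pch E \<alpha>)) else 0)"
  by pat_completeness auto
termination
  apply (relation "measure (\<lambda>(E,r,\<alpha>). nat (nrm E \<alpha>))")
    apply simp
   apply (simp only: in_measure prod.case)
   apply (elim conjE, rule term_dn; assumption)
  apply (simp only: in_measure prod.case)
  apply (elim conjE, rule term_up; assumption)
  done

declare pot.simps[simp del]

lemma pot_pos: "finite E \<Longrightarrow> \<exists>i\<in>E. \<alpha> i \<noteq> 0 \<Longrightarrow> j = pch E \<alpha> \<Longrightarrow> \<alpha> j > 0 \<Longrightarrow>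
   pot E r \<alpha> = pot E r (dn \<alpha> j) + r (dn \<alpha> j) j"
  by (subst pot.simps) auto

lemma pot_neg: "finite E \<Longrightarrow> \<exists>i\<in>E. \<alpha> i \<noteq> 0 \<Longrightarrow> j = pch E \<alpha> \<Longrightarrow> \<alpha> j < 0 \<Longrightarrow>
   pot E r \<alpha> = pot E r (up \<alpha> j) - r \<alpha> j"
  by (subst pot.simps) auto
lemma nrm_dn_pos: "finite E \<Longrightarrow> i \<in> E \<Longrightarrow> \<alpha> i > 0 \<Longrightarrow> nrm E (dn \<alpha> i) = nrm E \<alpha> - 1"
proof -
  assume a: "finite E" "i \<in> E" "\<alpha> i > 0"
  have "\<bar>\<alpha> i - 1\<bar> = \<bar>\<alpha> i\<bar> - 1" using a(3) by linarith
  then show ?thesis using nrm_dn[OF a(1,2), of \<alpha>] by simp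
qed
lemma nrm_up_neg: "finite E \<Longrightarrow> i \<in> E \<Longrightarrow> \<alpha> i < 0 \<Longrightarrow> nrm E (up \<alpha> i) = nrm E \<alpha> - 1"
proof -
  assume a: "finite E" "i \<in> E" "\<alpha> i < 0"
  have "\<bar>\<alpha> i + 1\<bar> = \<bar>\<alpha> i\<bar> - 1" using a(3) by linarith
  then show ?thesis using nrm_up[OF a(1,2), of \<alpha>] by simp
qed
lemma nrm_up_nn: "finite E \<Longrightarrow> i \<in> E \<Longrightarrow> \<alpha> i \<ge> 0 \<Longrightarrow> nrm E (up \<alpha> i) = nrm E \<alpha> + 1"
proof -
  assume a: "finite E" "i \<in> E" "\<alpha> i \<ge> 0"
  have "\<bar>\<alpha> i + 1\<bar> = \<bar>\<alpha> i\<bar> + 1" using a(3) by linarith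
  then show ?thesis using nrm_up[OF a(1,2), of \<alpha>] by simp
qed

lemma pot_step:
  assumes f: "finite E"
    and sq: "\<And>\<alpha> i j. \<alpha> \<in> zvec E \<Longrightarrow> i \<in> E \<Longrightarrow> j \<in> E \<Longrightarrow> r \<alpha> i + r (up \<alpha> i) j = r \<alpha> j + r (up \<alpha> j) i"
  shows "\<alpha> \<in> zvec E \<Longrightarrow> i \<in> E \<Longrightarrow> pot E r (up \<alpha> i) = pot E r \<alpha> + r \<alpha> i"
proof -
  have main: "\<forall>\<alpha> i. \<alpha> \<in> zvec E \<longrightarrow> i \<in> E \<longrightarrow> nat (nrm E \<alpha> + nrm E (up \<alpha> i)) = n \<longrightarrow>
     pot E r (up \<alpha> i) = pot E r \<alpha> + r \<alpha> i" for n
  proof (induction n rule: less_induct)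
    case (less n)
    show ?case
    proof (intro allI impI)
      fix \<alpha> i assume a: "\<alpha> \<in> zvec E" and i: "i \<in> E" and n: "nat (nrm E \<alpha> + nrm E (up \<alpha> i)) = n"
      have IH: "pot E r (up \<alpha>' i') = pot E r \<alpha>' + r \<alpha>' i'"
        if "\<alpha>' \<in> zvec E" "i' \<in> E" "nrm E \<alpha>' + nrm E (up \<alpha>' i') < nrm E \<alpha> + nrm E (up \<alpha> i)" for \<alpha>' i'
      proof -
        have lt: "nat (nrm E \<alpha>' + nrm E (up \<alpha>' i')) < n"
          using that(3) n nrm_nonneg[of E \<alpha>'] nrm_nonneg[of E "up \<alpha>' i'"] by linarith
        show ?thesis by (rule less.IH[OF lt, rule_format, OF that(1) that(2) refl])
      qed
      obtain \<beta> where \<beta>_def: "\<beta> = up \<alpha> i" by blast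
      have b: "\<beta> \<in> zvec E" using zvec_up[OF a i] \<beta>_def by simp
      have nbb: "nrm E (up \<alpha> i) = nrm E \<beta>" using \<beta>_def by simp
      have goal: "pot E r \<beta> = pot E r \<alpha> + r \<alpha> i"
      proof (cases "\<alpha> i \<ge> 0")
        case ge: True
        have bi: "\<beta> i > 0" using ge by (simp add: \<beta>_def up_app)
        have ex: "\<exists>k\<in>E. \<beta> k \<noteq> 0" using i bi by (intro bexI[where x=i]) auto
        obtain j where j_def: "j = pch E \<beta>" by blast
        have j: "j \<in> E" "\<beta> j \<noteq> 0" using pch[OF ex] j_def by auto
        have nb1: "nrm E \<beta> = nrm E \<alpha> + 1" using nrm_up_nn[OF f i, of \<alpha>] ge \<beta>_def by simp
        show ?thesis
        proof (cases "j = i")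
          case True
          have "pot E r \<beta> = pot E r (dn \<beta> j) + r (dn \<beta> j) j" using pot_pos[OF f ex j_def] bi True by simp
          moreover have "dn \<beta> j = \<alpha>" using True \<beta>_def by simp
          ultimately show ?thesis using True by simp
        next
          case ji: False
          have bj: "\<beta> j = \<alpha> j" using ji by (simp add: \<beta>_def up_app)
          show ?thesis
          proof (cases "\<alpha> j > 0")
            case True
            obtain \<alpha>1 where \<alpha>1_def: "\<alpha>1 = dn \<alpha> j" by blast
            have a1: "\<alpha>1 \<in> zvec E" using zvec_dn[OF a j(1)] \<alpha>1_def by simp
            have e1: "dn \<beta> j = up \<alpha>1 i" using ji by (simp add: \<alpha>1_def \<beta>_def updn_comm)
            have e2: "up \<alpha>1 j = \<alpha>" by (simp add: \<alpha>1_def)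
            have n1: "nrm E \<alpha>1 = nrm E \<alpha> - 1" using nrm_dn_pos[OF f j(1), of \<alpha>] True \<alpha>1_def by simp
            have n2: "nrm E (up \<alpha>1 i) = nrm E \<beta> - 1" using e1 nrm_dn_pos[OF f j(1), of \<beta>] True bj by simp
            have h1: "pot E r (up \<alpha>1 i) = pot E r \<alpha>1 + r \<alpha>1 i"
              by (rule IH[OF a1 i]) (use n1 n2 nbb nb1 in linarith)
            have h2: "pot E r (up \<alpha>1 j) = pot E r \<alpha>1 + r \<alpha>1 j"
              by (rule IH[OF a1 j(1)]) (use n1 nbb nb1 arg_cong[OF e2, of "nrm E"] in linarith)
            have s: "r \<alpha>1 i + r (up \<alpha>1 i) j = r \<alpha>1 j + r (up \<alpha>1 j) i" using sq[OF a1 i j(1)] .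
            have p: "pot E r \<beta> = pot E r (dn \<beta> j) + r (dn \<beta> j) j"
              using pot_pos[OF f ex j_def] True bj by simp
            have p2: "pot E r \<beta> = pot E r (up \<alpha>1 i) + r (up \<alpha>1 i) j" using p unfolding e1 .
            have h2': "pot E r \<alpha> = pot E r \<alpha>1 + r \<alpha>1 j" using h2 unfolding e2 .
            have s': "r \<alpha>1 i + r (up \<alpha>1 i) j = r \<alpha>1 j + r \<alpha> i" using s unfolding e2 .
            show ?thesis using p2 h1 h2' s' by linarith
          next
            case False
            then have aj: "\<alpha> j < 0" using j bj by simp
            obtain \<alpha>1 where \<alpha>1_def: "\<alpha>1 = up \<alpha> j" by blast
            have a1: "\<alpha>1 \<in> zvec E" using zvec_up[OF a j(1)] \<alpha>1_def by simp
            have e1: "up \<beta> j = up \<alpha>1 i" by (simp add: \<alpha>1_def \<beta>_def up_comm)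
            have n1: "nrm E \<alpha>1 = nrm E \<alpha> - 1" using nrm_up_neg[OF f j(1), of \<alpha>] aj \<alpha>1_def by simp
            have n2: "nrm E (up \<alpha>1 i) = nrm E \<beta> - 1" using e1 nrm_up_neg[OF f j(1), of \<beta>] aj bj by simp
            have h1: "pot E r (up \<alpha>1 i) = pot E r \<alpha>1 + r \<alpha>1 i"
              by (rule IH[OF a1 i]) (use n1 n2 nbb nb1 in linarith)
            have h2: "pot E r (up \<alpha> j) = pot E r \<alpha> + r \<alpha> j"
              by (rule IH[OF a j(1)]) (use n1 nbb nb1 arg_cong[OF \<alpha>1_def, of "nrm E"] in linarith)
            have s: "r \<alpha> i + r (up \<alpha> i) j = r \<alpha> j + r (up \<alpha> j) i" using sq[OF a i j(1)] .
            have p: "pot E r \<beta> = pot E r (up \<beta> j) - r \<beta> j"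
              using pot_neg[OF f ex j_def] aj bj by simp
            have p2: "pot E r \<beta> = pot E r (up \<alpha>1 i) - r \<beta> j" using p unfolding e1 .
            have h2': "pot E r \<alpha>1 = pot E r \<alpha> + r \<alpha> j" using h2 unfolding \<alpha>1_def[symmetric] .
            have s': "r \<alpha> i + r \<beta> j = r \<alpha> j + r \<alpha>1 i" using s unfolding \<alpha>1_def[symmetric] \<beta>_def[symmetric] .
            show ?thesis using p2 h1 h2' s' by linarith
          qed
        qed
      next
        case lt: False
        then have ai: "\<alpha> i < 0" by simp
        have ex: "\<exists>k\<in>E. \<alpha> k \<noteq> 0" using i ai by (intro bexI[where x=i]) auto
        obtain j where j_def: "j = pch E \<alpha>" by blast
        have j: "j \<in> E" "\<alpha> j \<noteq> 0" using pch[OF ex] j_def by auto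
        have nb1: "nrm E \<beta> = nrm E \<alpha> - 1" using nrm_up_neg[OF f i, of \<alpha>] ai \<beta>_def by simp
        show ?thesis
        proof (cases "j = i")
          case True
          have "pot E r \<alpha> = pot E r (up \<alpha> j) - r \<alpha> j" using pot_neg[OF f ex j_def] ai True by simp
          then show ?thesis using True \<beta>_def by simp
        next
          case ji: False
          have bj: "\<beta> j = \<alpha> j" using ji by (simp add: \<beta>_def up_app)
          show ?thesis
          proof (cases "\<alpha> j > 0")
            case True
            obtain \<alpha>1 where \<alpha>1_def: "\<alpha>1 = dn \<alpha> j" by blast
            obtain \<beta>1 where \<beta>1_def: "\<beta>1 = dn \<beta> j" by blast
            have a1: "\<alpha>1 \<in> zvec E" using zvec_dn[OF a j(1)] \<alpha>1_def by simp
            have b1: "\<beta>1 \<in> zvec E" using zvec_dn[OF b j(1)] \<beta>1_def by simp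
            have e1: "\<beta>1 = up \<alpha>1 i" using ji by (simp add: \<alpha>1_def \<beta>1_def \<beta>_def updn_comm)
            have e2: "up \<beta>1 j = \<beta>" by (simp add: \<beta>1_def)
            have e3: "up \<alpha>1 j = \<alpha>" by (simp add: \<alpha>1_def)
            have n1: "nrm E \<alpha>1 = nrm E \<alpha> - 1" using nrm_dn_pos[OF f j(1), of \<alpha>] True \<alpha>1_def by simp
            have n2: "nrm E \<beta>1 = nrm E \<beta> - 1" using nrm_dn_pos[OF f j(1), of \<beta>] True bj \<beta>1_def by simp
            have h1: "pot E r (up \<alpha>1 i) = pot E r \<alpha>1 + r \<alpha>1 i"
              by (rule IH[OF a1 i]) (use n1 n2 nbb nb1 arg_cong[OF e1, of "nrm E"] in linarith)
            have h2: "pot E r (up \<beta>1 j) = pot E r \<beta>1 + r \<beta>1 j"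
              by (rule IH[OF b1 j(1)]) (use n2 nbb nb1 arg_cong[OF e2, of "nrm E"] in linarith)
            have s: "r \<alpha>1 i + r (up \<alpha>1 i) j = r \<alpha>1 j + r (up \<alpha>1 j) i" using sq[OF a1 i j(1)] .
            have p: "pot E r \<alpha> = pot E r (dn \<alpha> j) + r (dn \<alpha> j) j"
              using pot_pos[OF f ex j_def] True by simp
            have p2: "pot E r \<alpha> = pot E r \<alpha>1 + r \<alpha>1 j" using p unfolding \<alpha>1_def[symmetric] .
            have h1': "pot E r \<beta>1 = pot E r \<alpha>1 + r \<alpha>1 i" using h1 unfolding e1[symmetric] .
            have h2': "pot E r \<beta> = pot E r \<beta>1 + r \<beta>1 j" using h2 unfolding e2 .
            have s': "r \<alpha>1 i + r \<beta>1 j = r \<alpha>1 j + r \<alpha> i" using s unfolding e1[symmetric] e3 .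
            show ?thesis using p2 h1' h2' s' by linarith
          next
            case False
            then have aj: "\<alpha> j < 0" using j by simp
            obtain \<alpha>1 where \<alpha>1_def: "\<alpha>1 = up \<alpha> j" by blast
            obtain \<beta>1 where \<beta>1_def: "\<beta>1 = up \<beta> j" by blast
            have a1: "\<alpha>1 \<in> zvec E" using zvec_up[OF a j(1)] \<alpha>1_def by simp
            have e1: "\<beta>1 = up \<alpha>1 i" by (simp add: \<alpha>1_def \<beta>1_def \<beta>_def up_comm)
            have n1: "nrm E \<alpha>1 = nrm E \<alpha> - 1" using nrm_up_neg[OF f j(1), of \<alpha>] aj \<alpha>1_def by simp
            have n2: "nrm E \<beta>1 = nrm E \<beta> - 1" using nrm_up_neg[OF f j(1), of \<beta>] aj bj \<beta>1_def by simp
            have h1: "pot E r (up \<alpha>1 i) = pot E r \<alpha>1 + r \<alpha>1 i"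
              by (rule IH[OF a1 i]) (use n1 n2 nbb nb1 arg_cong[OF e1, of "nrm E"] in linarith)
            have h2: "pot E r (up \<beta> j) = pot E r \<beta> + r \<beta> j"
              by (rule IH[OF b j(1)]) (use n2 nbb nb1 arg_cong[OF \<beta>1_def, of "nrm E"] in linarith)
            have s: "r \<alpha> i + r (up \<alpha> i) j = r \<alpha> j + r (up \<alpha> j) i" using sq[OF a i j(1)] .
            have p: "pot E r \<alpha> = pot E r (up \<alpha> j) - r \<alpha> j"
              using pot_neg[OF f ex j_def] aj by simp
            have p2: "pot E r \<alpha> = pot E r \<alpha>1 - r \<alpha> j" using p unfolding \<alpha>1_def[symmetric] .
            have h1': "pot E r \<beta>1 = pot E r \<alpha>1 + r \<alpha>1 i" using h1 unfolding e1[symmetric] .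
            have h2': "pot E r \<beta>1 = pot E r \<beta> + r \<beta> j" using h2 unfolding \<beta>1_def[symmetric] .
            have s': "r \<alpha> i + r \<beta> j = r \<alpha> j + r \<alpha>1 i" using s unfolding \<alpha>1_def[symmetric] \<beta>_def[symmetric] .
            show ?thesis using p2 h1' h2' s' by linarith
          qed
        qed
      qed
      then show "pot E r (up \<alpha> i) = pot E r \<alpha> + r \<alpha> i" using \<beta>_def by simp
    qed
  qed
  assume "\<alpha> \<in> zvec E" "i \<in> E"
  then show ?thesis by (rule main[of "nat (nrm E \<alpha> + nrm E (up \<alpha> i))", rule_format, OF _ _ refl])
qed

lemma dist_upd2: fixes \<alpha> \<beta> :: "'a \<Rightarrow> int" shows "finite E \<Longrightarrow> x \<in> E \<Longrightarrow>
  (\<Sum>y\<in>E. \<bar>\<alpha> y - (\<beta>(x := c)) y\<bar>) = (\<Sum>y\<in>E. \<bar>\<alpha> y - \<beta> y\<bar>) - \<bar>\<alpha> x - \<beta> x\<bar> + \<bar>\<alpha> x - c\<bar>"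
proof -
  assume f: "finite E" and i: "x \<in> E"
  have "(\<Sum>y\<in>E. \<bar>\<alpha> y - (\<beta>(x := c)) y\<bar>) = \<bar>\<alpha> x - c\<bar> + (\<Sum>y\<in>E - {x}. \<bar>\<alpha> y - \<beta> y\<bar>)"
    using sum.remove[OF f i, of "\<lambda>y. \<bar>\<alpha> y - (\<beta>(x := c)) y\<bar>"] by simp
  moreover have "(\<Sum>y\<in>E. \<bar>\<alpha> y - \<beta> y\<bar>) = \<bar>\<alpha> x - \<beta> x\<bar> + (\<Sum>y\<in>E - {x}. \<bar>\<alpha> y - \<beta> y\<bar>)"
    using sum.remove[OF f i] by simp
  ultimately show ?thesis by linarith
qed

lemma dist_upd1: fixes \<alpha> \<beta> :: "'a \<Rightarrow> int" shows "finite E \<Longrightarrow> x \<in> E \<Longrightarrow>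
  (\<Sum>y\<in>E. \<bar>(\<alpha>(x := c)) y - \<beta> y\<bar>) = (\<Sum>y\<in>E. \<bar>\<alpha> y - \<beta> y\<bar>) - \<bar>\<alpha> x - \<beta> x\<bar> + \<bar>c - \<beta> x\<bar>"
proof -
  assume f: "finite E" and i: "x \<in> E"
  have "(\<Sum>y\<in>E. \<bar>(\<alpha>(x := c)) y - \<beta> y\<bar>) = \<bar>c - \<beta> x\<bar> + (\<Sum>y\<in>E - {x}. \<bar>\<alpha> y - \<beta> y\<bar>)"
    using sum.remove[OF f i, of "\<lambda>y. \<bar>(\<alpha>(x := c)) y - \<beta> y\<bar>"] by simp
  moreover have "(\<Sum>y\<in>E. \<bar>\<alpha> y - \<beta> y\<bar>) = \<bar>\<alpha> x - \<beta> x\<bar> + (\<Sum>y\<in>E - {x}. \<bar>\<alpha> y - \<beta> y\<bar>)"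
    using sum.remove[OF f i] by simp
  ultimately show ?thesis by linarith
qed

lemma sumB_up: fixes \<beta> :: "'a \<Rightarrow> int" shows "finite B \<Longrightarrow> (\<Sum>y\<in>B. up \<beta> x y) = (\<Sum>y\<in>B. \<beta> y) + (if x \<in> B then 1 else 0)"
proof (cases "x \<in> B")
  case True
  assume f: "finite B"
  have "(\<Sum>y\<in>B. up \<beta> x y) = up \<beta> x x + (\<Sum>y\<in>B - {x}. up \<beta> x y)" using sum.remove[OF f True] .
  moreover have "(\<Sum>y\<in>B - {x}. up \<beta> x y) = (\<Sum>y\<in>B - {x}. \<beta> y)" by (rule sum.cong) (auto simp: up_app)
  moreover have "(\<Sum>y\<in>B. \<beta> y) = \<beta> x + (\<Sum>y\<in>B - {x}. \<beta> y)" using sum.remove[OF f True] .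
  ultimately show ?thesis using True by (simp add: up_app)
next
  case False
  have "(\<Sum>y\<in>B. up \<beta> x y) = (\<Sum>y\<in>B. \<beta> y)" by (rule sum.cong) (use False in \<open>auto simp: up_app\<close>)
  then show ?thesis using False by simp
qed

context flk begin

lemma P1u: "\<alpha> \<in> zvec E \<Longrightarrow> i \<in> E \<Longrightarrow> nl \<alpha> i \<Longrightarrow> M (up \<alpha> i) = {B\<in>M \<alpha>. i \<in> B}"
  using P1 unfolding up_def nl_def by blast
lemma P2u: "\<alpha> \<in> zvec E \<Longrightarrow> i \<in> E \<Longrightarrow> \<not> nl \<alpha> i \<Longrightarrow> M \<alpha> = {B\<in>M (up \<alpha> i). i \<notin> B}"
  using P2 unfolding up_def nl_def by blast

definition gp :: "('a \<Rightarrow> int) \<Rightarrow> int" where "gp \<alpha> = pot E rk \<alpha>"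

lemma gp_step: "\<alpha> \<in> zvec E \<Longrightarrow> i \<in> E \<Longrightarrow> gp (up \<alpha> i) = gp \<alpha> + rk \<alpha> i"
proof -
  have sq: "\<And>\<alpha> i j. \<alpha> \<in> zvec E \<Longrightarrow> i \<in> E \<Longrightarrow> j \<in> E \<Longrightarrow>
     rk \<alpha> i + rk (up \<alpha> i) j = rk \<alpha> j + rk (up \<alpha> j) i"
    unfolding up_def by (rule square)
  assume "\<alpha> \<in> zvec E" "i \<in> E"
  then show ?thesis using pot_step[OF finE sq] unfolding gp_def by blast
qed

definition Phi :: "'a set \<Rightarrow> ('a \<Rightarrow> int) \<Rightarrow> int" where
  "Phi B \<alpha> = gp \<alpha> - (\<Sum>x\<in>B. \<alpha> x)"

definition dst :: "('a \<Rightarrow> int) \<Rightarrow> ('a \<Rightarrow> int) \<Rightarrow> int" where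
  "dst \<alpha> \<beta> = (\<Sum>y\<in>E. \<bar>\<alpha> y - \<beta> y\<bar>)"

lemma phi_main:
  assumes "\<alpha> \<in> zvec E" "\<beta> \<in> zvec E" "B \<in> M \<beta>"
  shows "Phi B \<beta> \<le> Phi B \<alpha> \<and> (Phi B \<alpha> \<le> Phi B \<beta> \<longrightarrow> B \<in> M \<alpha>)"
proof -
  have main: "\<forall>\<alpha> \<beta>. \<alpha> \<in> zvec E \<longrightarrow> \<beta> \<in> zvec E \<longrightarrow> B \<in> M \<beta> \<longrightarrow> nat (dst \<alpha> \<beta>) = n \<longrightarrow>
     Phi B \<beta> \<le> Phi B \<alpha> \<and> (Phi B \<alpha> \<le> Phi B \<beta> \<longrightarrow> B \<in> M \<alpha>)" for n
  proof (induction n rule: less_induct)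
    case (less n)
    show ?case
    proof (intro allI impI)
      fix \<alpha> \<beta> assume a: "\<alpha> \<in> zvec E" and b: "\<beta> \<in> zvec E" and Bb: "B \<in> M \<beta>" and n: "nat (dst \<alpha> \<beta>) = n"
      have finB: "finite B" and BE: "B \<subseteq> E" using bas[OF b Bb] by auto
      have dnn: "dst \<alpha>' \<beta>' \<ge> 0" for \<alpha>' \<beta>' unfolding dst_def by (simp add: sum_nonneg)
      have IH: "Phi B \<beta>' \<le> Phi B \<alpha>' \<and> (Phi B \<alpha>' \<le> Phi B \<beta>' \<longrightarrow> B \<in> M \<alpha>')"
        if "\<alpha>' \<in> zvec E" "\<beta>' \<in> zvec E" "B \<in> M \<beta>'" "dst \<alpha>' \<beta>' < dst \<alpha> \<beta>" for \<alpha>' \<beta>'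
      proof -
        have "nat (dst \<alpha>' \<beta>') < n" using that(4) n dnn[of \<alpha>' \<beta>'] by linarith
        then show ?thesis using less.IH that(1-3) by blast
      qed
      show "Phi B \<beta> \<le> Phi B \<alpha> \<and> (Phi B \<alpha> \<le> Phi B \<beta> \<longrightarrow> B \<in> M \<alpha>)"
      proof (cases "\<alpha> = \<beta>")
        case True then show ?thesis using Bb by simp
      next
        case False
        have "\<exists>x\<in>E. \<alpha> x \<noteq> \<beta> x"
        proof (rule ccontr)
          assume "\<not> (\<exists>x\<in>E. \<alpha> x \<noteq> \<beta> x)"
          then have "\<alpha> = \<beta>" using a b unfolding zvec_def fun_eq_iff by auto
          then show False using False by simp
        qed
        then obtain x where x: "x \<in> E" "\<alpha> x \<noteq> \<beta> x" by blast
        consider (c1) "x \<in> B" "\<alpha> x > \<beta> x" | (c2) "x \<notin> B" "\<alpha> x < \<beta> x"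
          | (c3) "x \<in> B" "\<alpha> x < \<beta> x" | (c4) "x \<notin> B" "\<alpha> x > \<beta> x"
          using x(2) less_linear[of "\<alpha> x" "\<beta> x"] by blast
        then show ?thesis
        proof cases
          case c1
          define \<beta>' where "\<beta>' = up \<beta> x"
          have b': "\<beta>' \<in> zvec E" using zvec_up[OF b x(1)] \<beta>'_def by simp
          have nlx: "nl \<beta> x" using Bb c1 by (auto simp: nl_def)
          have "B \<in> M \<beta>'" using P1u[OF b x(1) nlx] Bb c1 \<beta>'_def by simp
          moreover have "Phi B \<beta>' = Phi B \<beta>"
            using gp_step[OF b x(1)] nlx sumB_up[OF finB, of \<beta> x] c1
            by (simp add: Phi_def \<beta>'_def rk_def)
          moreover have "dst \<alpha> \<beta>' < dst \<alpha> \<beta>"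
          proof -
            have "\<bar>\<alpha> x - (\<beta> x + 1)\<bar> = \<bar>\<alpha> x - \<beta> x\<bar> - 1" using c1 by linarith
            then show ?thesis using dist_upd2[OF finE x(1), of \<alpha> \<beta> "\<beta> x + 1"]
              by (simp add: dst_def \<beta>'_def up_def)
          qed
          ultimately show ?thesis using IH[OF a b'] by simp
        next
          case c2
          define \<beta>' where "\<beta>' = dn \<beta> x"
          have b': "\<beta>' \<in> zvec E" using zvec_dn[OF b x(1)] \<beta>'_def by simp
          have ub: "up \<beta>' x = \<beta>" by (simp add: \<beta>'_def)
          have nlx: "\<not> nl \<beta>' x"
          proof
            assume "nl \<beta>' x"
            then have "M \<beta> = {Z\<in>M \<beta>'. x \<in> Z}" using P1u[OF b' x(1)] ub by simp
            then show False using Bb c2 by auto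
          qed
          have "B \<in> M \<beta>'" using P2u[OF b' x(1) nlx] Bb c2 ub by simp
          moreover have "Phi B \<beta>' = Phi B \<beta>"
            using gp_step[OF b' x(1)] nlx sumB_up[OF finB, of \<beta>' x] c2 ub
            by (simp add: Phi_def rk_def)
          moreover have "dst \<alpha> \<beta>' < dst \<alpha> \<beta>"
          proof -
            have "\<bar>\<alpha> x - (\<beta> x - 1)\<bar> = \<bar>\<alpha> x - \<beta> x\<bar> - 1" using c2 by linarith
            then show ?thesis using dist_upd2[OF finE x(1), of \<alpha> \<beta> "\<beta> x - 1"]
              by (simp add: dst_def \<beta>'_def dn_def)
          qed
          ultimately show ?thesis using IH[OF a b'] by simp
        next
          case c3
          define \<alpha>' where "\<alpha>' = up \<alpha> x"
          have a': "\<alpha>' \<in> zvec E" using zvec_up[OF a x(1)] \<alpha>'_def by simp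
          have "dst \<alpha>' \<beta> < dst \<alpha> \<beta>"
          proof -
            have "\<bar>\<alpha> x + 1 - \<beta> x\<bar> = \<bar>\<alpha> x - \<beta> x\<bar> - 1" using c3 by linarith
            then show ?thesis using dist_upd1[OF finE x(1), of \<alpha> "\<alpha> x + 1" \<beta>]
              by (simp add: dst_def \<alpha>'_def up_def)
          qed
          then have ih: "Phi B \<beta> \<le> Phi B \<alpha>' \<and> (Phi B \<alpha>' \<le> Phi B \<beta> \<longrightarrow> B \<in> M \<alpha>')"
            using IH[OF a' b Bb] by simp
          have ph: "Phi B \<alpha>' = Phi B \<alpha> + rk \<alpha> x - 1"
            using gp_step[OF a x(1)] sumB_up[OF finB, of \<alpha> x] c3
            by (simp add: Phi_def \<alpha>'_def)
          have r01: "rk \<alpha> x = 0 \<or> rk \<alpha> x = 1" by (simp add: rk_def)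
          have g1: "Phi B \<beta> \<le> Phi B \<alpha>" using ih ph r01 by auto
          moreover have "B \<in> M \<alpha>" if le: "Phi B \<alpha> \<le> Phi B \<beta>"
          proof -
            have r1: "rk \<alpha> x = 1" using ih ph r01 le by auto
            then have nlx: "nl \<alpha> x" by (simp add: rk_def split: if_splits)
            have "B \<in> M \<alpha>'" using ih ph r1 le by auto
            then show ?thesis using P1u[OF a x(1) nlx] \<alpha>'_def by simp
          qed
          ultimately show ?thesis by blast
        next
          case c4
          define \<alpha>' where "\<alpha>' = dn \<alpha> x"
          have a': "\<alpha>' \<in> zvec E" using zvec_dn[OF a x(1)] \<alpha>'_def by simp
          have ua: "up \<alpha>' x = \<alpha>" by (simp add: \<alpha>'_def)
          have "dst \<alpha>' \<beta> < dst \<alpha> \<beta>"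
          proof -
            have "\<bar>\<alpha> x - 1 - \<beta> x\<bar> = \<bar>\<alpha> x - \<beta> x\<bar> - 1" using c4 by linarith
            then show ?thesis using dist_upd1[OF finE x(1), of \<alpha> "\<alpha> x - 1" \<beta>]
              by (simp add: dst_def \<alpha>'_def dn_def)
          qed
          then have ih: "Phi B \<beta> \<le> Phi B \<alpha>' \<and> (Phi B \<alpha>' \<le> Phi B \<beta> \<longrightarrow> B \<in> M \<alpha>')"
            using IH[OF a' b Bb] by simp
          have ph: "Phi B \<alpha> = Phi B \<alpha>' + rk \<alpha>' x"
            using gp_step[OF a' x(1)] sumB_up[OF finB, of \<alpha>' x] c4 ua
            by (simp add: Phi_def)
          have r01: "rk \<alpha>' x = 0 \<or> rk \<alpha>' x = 1" by (simp add: rk_def)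
          have g1: "Phi B \<beta> \<le> Phi B \<alpha>" using ih ph r01 by auto
          moreover have "B \<in> M \<alpha>" if le: "Phi B \<alpha> \<le> Phi B \<beta>"
          proof -
            have r1: "rk \<alpha>' x = 0" using ih ph r01 le by auto
            then have nlx: "\<not> nl \<alpha>' x" by (simp add: rk_def split: if_splits)
            have "B \<in> M \<alpha>'" using ih ph r1 le by auto
            then show ?thesis using P2u[OF a' x(1) nlx] ua c4 by auto
          qed
          ultimately show ?thesis by blast
        qed
      qed
    qed
  qed
  show ?thesis using main assms by blast
qed

end

lemma finite_dsubsets: "finite E \<Longrightarrow> finite (dsubsets E d)"
proof -
  assume f: "finite E"
  have "dsubsets E d \<subseteq> Pow E" by (auto simp: dsubsets_def)
  then show ?thesis using f by (meson finite_Pow_iff finite_subset)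
qed

lemma finite_argmax:
  fixes f :: "'b \<Rightarrow> int"
  assumes "finite A" "A \<noteq> {}"
  obtains x where "x \<in> A" "\<forall>y\<in>A. f y \<le> f x"
proof -
  have "Max (f ` A) \<in> f ` A" using assms by simp
  then obtain x where x: "x \<in> A" "f x = Max (f ` A)" by auto
  have "\<forall>y\<in>A. f y \<le> f x" using x assms by simp
  then show ?thesis using that x by blast
qed

lemma VB:
  fixes \<nu> :: "'a set \<Rightarrow> ereal" and Dn :: "'a set set" and z :: "'a set \<Rightarrow> int" and \<alpha> :: "'a \<Rightarrow> int"
  assumes fE: "finite E" and Dsub: "Dn \<subseteq> dsubsets E d" and Dne: "Dn \<noteq> {}"
    and nu: "\<forall>B\<in>dsubsets E d. \<nu> B = (if B \<in> Dn then ereal (of_int (z B)) else \<infinity>)"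
  shows "val_bases E d \<nu> (\<lambda>i. real_of_int (\<alpha> i)) =
     {B\<in>Dn. \<forall>B'\<in>Dn. (\<Sum>x\<in>B'. \<alpha> x) - z B' \<le> (\<Sum>x\<in>B. \<alpha> x) - z B}"
proof -
  define f where "f B = (\<Sum>x\<in>B. \<alpha> x) - z B" for B
  have fD: "finite Dn" using finite_dsubsets[OF fE] Dsub finite_subset by blast
  obtain B0 where B0: "B0 \<in> Dn" "\<forall>B\<in>Dn. f B \<le> f B0" using finite_argmax[OF fD Dne] by blast
  define t where "t B = ereal (\<Sum>i\<in>B. real_of_int (\<alpha> i)) - \<nu> B" for B
  have tD: "t B = ereal (of_int (f B))" if "B \<in> Dn" for B
  proof -
    have "B \<in> dsubsets E d" using that Dsub by blast
    then have "\<nu> B = ereal (of_int (z B))" using nu that by simp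
    moreover have "(\<Sum>i\<in>B. real_of_int (\<alpha> i)) = real_of_int (\<Sum>i\<in>B. \<alpha> i)" by simp
    ultimately show ?thesis by (simp add: t_def f_def)
  qed
  have tN: "t B = -\<infinity>" if "B \<in> dsubsets E d" "B \<notin> Dn" for B
    using nu that by (simp add: t_def)
  have g: "gval E d \<nu> (\<lambda>i. real_of_int (\<alpha> i)) = ereal (of_int (f B0))"
    unfolding gval_def t_def[symmetric]
  proof (rule antisym)
    show "(SUP B\<in>dsubsets E d. t B) \<le> ereal (of_int (f B0))"
    proof (rule SUP_least)
      fix B assume B: "B \<in> dsubsets E d"
      show "t B \<le> ereal (of_int (f B0))"
      proof (cases "B \<in> Dn")
        case True then show ?thesis using tD B0 by simp
      next
        case False then show ?thesis using tN B by simp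
      qed
    qed
    show "ereal (of_int (f B0)) \<le> (SUP B\<in>dsubsets E d. t B)"
      using SUP_upper[of B0 "dsubsets E d" t] B0 Dsub tD by auto
  qed
  show ?thesis
  proof (intro set_eqI iffI)
    fix B assume "B \<in> val_bases E d \<nu> (\<lambda>i. real_of_int (\<alpha> i))"
    then have B: "B \<in> dsubsets E d" "t B = ereal (of_int (f B0))"
      unfolding val_bases_def g t_def by auto
    have "B \<in> Dn" using B tN by (cases "B \<in> Dn") auto
    then have "f B = f B0" using B tD by simp
    then show "B \<in> {B\<in>Dn. \<forall>B'\<in>Dn. (\<Sum>x\<in>B'. \<alpha> x) - z B' \<le> (\<Sum>x\<in>B. \<alpha> x) - z B}"
      using \<open>B \<in> Dn\<close> B0 by (simp add: f_def)
  next
    fix B assume "B \<in> {B\<in>Dn. \<forall>B'\<in>Dn. (\<Sum>x\<in>B'. \<alpha> x) - z B' \<le> (\<Sum>x\<in>B. \<alpha> x) - z B}"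
    then have B: "B \<in> Dn" "\<forall>B'\<in>Dn. f B' \<le> f B" by (auto simp: f_def)
    then have "f B = f B0" using B0 by (meson antisym)
    then have "t B = ereal (of_int (f B0))" using tD B by simp
    then show "B \<in> val_bases E d \<nu> (\<lambda>i. real_of_int (\<alpha> i))"
      using B Dsub unfolding val_bases_def g t_def by auto
  qed
qed

context flk begin

definition Dm :: "'a set set" where "Dm = {B. \<exists>\<beta>\<in>zvec E. B \<in> M \<beta>}"

definition wt :: "'a set \<Rightarrow> int" where
  "wt B = (let \<beta> = (SOME \<beta>. \<beta> \<in> zvec E \<and> B \<in> M \<beta>) in (\<Sum>x\<in>B. \<beta> x) - gp \<beta>)"

lemma Dm_sub: "Dm \<subseteq> dsubsets E d"
  using bas unfolding Dm_def dsubsets_def by blast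

lemma M_sub_Dm: "\<alpha> \<in> zvec E \<Longrightarrow> M \<alpha> \<subseteq> Dm"
  unfolding Dm_def by blast

lemma zero_zvec: "(\<lambda>x. 0) \<in> zvec E" by (simp add: zvec_def)

lemma Dm_ne: "Dm \<noteq> {}"
  using M_sub_Dm[OF zero_zvec] nonempty[OF zero_zvec] by blast

lemma finite_Dm: "finite Dm"
  using Dm_sub finite_dsubsets[OF finE] finite_subset by blast

lemma key:
  assumes a: "\<alpha> \<in> zvec E" and B: "B \<in> Dm"
  shows "(\<Sum>x\<in>B. \<alpha> x) - wt B \<le> gp \<alpha> \<and> ((\<Sum>x\<in>B. \<alpha> x) - wt B = gp \<alpha> \<longleftrightarrow> B \<in> M \<alpha>)"
proof -
  define \<beta> where "\<beta> = (SOME \<beta>. \<beta> \<in> zvec E \<and> B \<in> M \<beta>)"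
  have "\<exists>\<beta>. \<beta> \<in> zvec E \<and> B \<in> M \<beta>" using B unfolding Dm_def by blast
  then have b: "\<beta> \<in> zvec E" "B \<in> M \<beta>" unfolding \<beta>_def by (metis (mono_tags, lifting) someI_ex)+
  have w: "wt B = (\<Sum>x\<in>B. \<beta> x) - gp \<beta>" by (simp add: wt_def \<beta>_def Let_def)
  have p1: "Phi B \<beta> \<le> Phi B \<alpha> \<and> (Phi B \<alpha> \<le> Phi B \<beta> \<longrightarrow> B \<in> M \<alpha>)" using phi_main[OF a b] .
  have p2: "B \<in> M \<alpha> \<Longrightarrow> Phi B \<alpha> \<le> Phi B \<beta>" using phi_main[OF b(1) a] by blast
  show ?thesis using p1 p2 w unfolding Phi_def by auto
qed

lemma M_amax:
  assumes a: "\<alpha> \<in> zvec E"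
  shows "Z \<in> M \<alpha> \<longleftrightarrow> Z \<in> Dm \<and> (\<forall>Z'\<in>Dm. (\<Sum>x\<in>Z'. \<alpha> x) - wt Z' \<le> (\<Sum>x\<in>Z. \<alpha> x) - wt Z)"
proof
  assume Z: "Z \<in> M \<alpha>"
  then have "Z \<in> Dm" using M_sub_Dm[OF a] by blast
  then show "Z \<in> Dm \<and> (\<forall>Z'\<in>Dm. (\<Sum>x\<in>Z'. \<alpha> x) - wt Z' \<le> (\<Sum>x\<in>Z. \<alpha> x) - wt Z)"
  proof (intro conjI ballI)
    fix Z' assume Z': "Z' \<in> Dm"
    have "(\<Sum>x\<in>Z'. \<alpha> x) - wt Z' \<le> gp \<alpha>" using key[OF a Z'] by blast
    moreover have "(\<Sum>x\<in>Z. \<alpha> x) - wt Z = gp \<alpha>" using key[OF a \<open>Z \<in> Dm\<close>] Z by blast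
    ultimately show "(\<Sum>x\<in>Z'. \<alpha> x) - wt Z' \<le> (\<Sum>x\<in>Z. \<alpha> x) - wt Z" by simp
  qed (rule \<open>Z \<in> Dm\<close>)
next
  assume h: "Z \<in> Dm \<and> (\<forall>Z'\<in>Dm. (\<Sum>x\<in>Z'. \<alpha> x) - wt Z' \<le> (\<Sum>x\<in>Z. \<alpha> x) - wt Z)"
  obtain Z0 where Z0: "Z0 \<in> M \<alpha>" using nonempty[OF a] by blast
  then have "Z0 \<in> Dm" using M_sub_Dm[OF a] by blast
  then have "(\<Sum>x\<in>Z0. \<alpha> x) - wt Z0 = gp \<alpha>" using key[OF a] Z0 by blast
  moreover have "(\<Sum>x\<in>Z0. \<alpha> x) - wt Z0 \<le> (\<Sum>x\<in>Z. \<alpha> x) - wt Z" using h \<open>Z0 \<in> Dm\<close> by blast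
  moreover have "(\<Sum>x\<in>Z. \<alpha> x) - wt Z \<le> gp \<alpha>" using key[OF a] h by blast
  ultimately show "Z \<in> M \<alpha>" using key[OF a] h by (metis antisym)
qed

definition nu :: "'a set \<Rightarrow> ereal" where
  "nu B = (if B \<in> Dm then ereal (of_int (wt B)) else \<infinity>)"

lemma M_vb: "\<alpha> \<in> zvec E \<Longrightarrow> M \<alpha> = val_bases E d nu (\<lambda>i. real_of_int (\<alpha> i))"
  using VB[OF finE Dm_sub Dm_ne, of nu wt \<alpha>] M_amax by (auto simp: nu_def)

end

lemma card_diff_sym: "finite X \<Longrightarrow> finite Y \<Longrightarrow> card X = card Y \<Longrightarrow> card (X - Y) = card (Y - X)"
  by (metis card_Diff_subset_Int finite_Int inf_commute)

lemma dual_exch: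
  assumes m: "matroid_of_rank E d Bs" and fE: "finite E"
  shows "B \<in> Bs \<Longrightarrow> B' \<in> Bs \<Longrightarrow> y \<in> B' - B \<Longrightarrow> \<exists>x\<in>B - B'. insert y (B - {x}) \<in> Bs"
proof (induction "card (B' - B)" arbitrary: B' rule: less_induct)
  case less
  have mb: "matroid_bases E Bs" and cd: "\<forall>B\<in>Bs. card B = d" using m by (auto simp: matroid_of_rank_def)
  have fin: "finite Z" if "Z \<in> Bs" for Z using that mb fE unfolding matroid_bases_def by (meson finite_subset)
  have ax: "\<forall>B\<in>Bs. \<forall>B'\<in>Bs. \<forall>x\<in>B - B'. \<exists>y\<in>B' - B. insert y (B - {x}) \<in> Bs"
    using mb unfolding matroid_bases_def by blast
  have cc: "card (B - B') = card (B' - B)"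
    using card_diff_sym[OF fin[OF less.prems(1)] fin[OF less.prems(2)]] cd less.prems by simp
  show ?case
  proof (cases "B' - B = {y}")
    case True
    then have "card (B - B') = 1" using cc by simp
    then obtain x where x: "B - B' = {x}" by (meson card_1_singletonE)
    have "insert y (B - {x}) = B'" using x True by blast
    then show ?thesis using x less.prems(2) by blast
  next
    case False
    then obtain z where z: "z \<in> B' - B" "z \<noteq> y" using less.prems(3) by blast
    obtain w where w: "w \<in> B - B'" "insert w (B' - {z}) \<in> Bs" using ax less.prems(1,2) z(1) by blast
    define B'' where "B'' = insert w (B' - {z})"
    have e: "B'' - B = (B' - B) - {z}" using w(1) z(1) by (auto simp: B''_def)
    have lt: "card (B'' - B) < card (B' - B)"
      unfolding e by (rule card_Diff1_less) (use z(1) fin[OF less.prems(2)] in auto)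
    have y'': "y \<in> B'' - B" using e less.prems(3) z(2) by blast
    obtain x where x: "x \<in> B - B''" "insert y (B - {x}) \<in> Bs"
      using less.hyps[OF lt less.prems(1) _ y''] w(2) B''_def by blast
    have "x \<in> B - B'" using x(1) z(1) by (auto simp: B''_def)
    then show ?thesis using x(2) by blast
  qed
qed

context flk begin

lemma mat_bases: "\<alpha> \<in> zvec E \<Longrightarrow> matroid_bases E (M \<alpha>)"
  using mat by (simp add: matroid_of_rank_def)

lemma exch_ax: "\<alpha> \<in> zvec E \<Longrightarrow> B \<in> M \<alpha> \<Longrightarrow> B' \<in> M \<alpha> \<Longrightarrow> x \<in> B - B' \<Longrightarrow> \<exists>y\<in>B' - B. insert y (B - {x}) \<in> M \<alpha>"
  using mat_bases unfolding matroid_bases_def by blast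

lemma Dm_fin: "Z \<in> Dm \<Longrightarrow> finite Z \<and> Z \<subseteq> E \<and> card Z = d"
  using Dm_sub finE by (auto simp: dsubsets_def intro: finite_subset)

lemma sum_ind: "finite Z \<Longrightarrow> (\<Sum>x\<in>Z. if x \<in> C then (L::int) else 0) = L * int (card (Z \<inter> C))"
proof -
  assume f: "finite Z"
  have "(\<Sum>x\<in>Z. if x \<in> C then L else 0) = (\<Sum>x\<in>{x\<in>Z. x \<in> C}. L)" using sum.inter_filter[OF f, of "\<lambda>_. L"] by simp
  also have "\<dots> = L * int (card {x\<in>Z. x \<in> C})" by simp
  also have "{x\<in>Z. x \<in> C} = Z \<inter> C" by blast
  finally show ?thesis .
qed

lemma localize:
  fixes s :: "'a \<Rightarrow> int"
  assumes CS: "C \<inter> S = {}" and CE: "C \<subseteq> E" and SE: "S \<subseteq> E" and s0: "\<And>x. x \<notin> S \<Longrightarrow> s x = 0"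
    and Fne: "\<exists>Z\<in>Dm. C \<subseteq> Z \<and> Z \<subseteq> C \<union> S"
  shows "\<exists>\<alpha>\<in>zvec E. \<forall>Z. Z \<in> M \<alpha> \<longleftrightarrow> (Z \<in> Dm \<and> C \<subseteq> Z \<and> Z \<subseteq> C \<union> S) \<and>
     (\<forall>Z'. Z' \<in> Dm \<and> C \<subseteq> Z' \<and> Z' \<subseteq> C \<union> S \<longrightarrow> (\<Sum>x\<in>Z'. s x) - wt Z' \<le> (\<Sum>x\<in>Z. s x) - wt Z)"
proof -
  define F where "F = {Z\<in>Dm. C \<subseteq> Z \<and> Z \<subseteq> C \<union> S}"
  define K where "K = (\<Sum>Z\<in>Dm. \<bar>wt Z\<bar>)"
  define T where "T = (\<Sum>x\<in>E. \<bar>s x\<bar>)"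
  define L where "L = 2 * K + 2 * T + 1"
  define h where "h x = (if x \<in> C then L else if x \<in> E - S then - L else 0)" for x
  define \<alpha> where "\<alpha> x = s x + h x" for x
  define c where "c = int (card C)"
  have K0: "\<bar>wt Z\<bar> \<le> K" if "Z \<in> Dm" for Z
    unfolding K_def using member_le_sum[of Z Dm "\<lambda>Z. \<bar>wt Z\<bar>"] that finite_Dm by simp
  have T0: "\<bar>\<Sum>x\<in>Z. s x\<bar> \<le> T" if "Z \<in> Dm" for Z
  proof -
    have "\<bar>\<Sum>x\<in>Z. s x\<bar> \<le> (\<Sum>x\<in>Z. \<bar>s x\<bar>)" by (rule sum_abs)
    also have "\<dots> \<le> T" unfolding T_def using Dm_fin[OF that] finE by (intro sum_mono2) auto
    finally show ?thesis .
  qed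
  have "K \<ge> 0" unfolding K_def by (simp add: sum_nonneg)
  moreover have "T \<ge> 0" unfolding T_def by (simp add: sum_nonneg)
  ultimately have Lpos: "L \<ge> 0" unfolding L_def by linarith
  have a: "\<alpha> \<in> zvec E" unfolding zvec_def \<alpha>_def h_def using s0 SE CE by auto
  have hF: "(\<Sum>x\<in>Z. h x) = L * c" if "Z \<in> F" for Z
  proof -
    have Z: "finite Z" "C \<subseteq> Z" "Z \<subseteq> C \<union> S" using that Dm_fin unfolding F_def by auto
    have "(\<Sum>x\<in>Z. h x) = (\<Sum>x\<in>Z. if x \<in> C then L else 0)"
      by (rule sum.cong) (use Z in \<open>auto simp: h_def\<close>)
    also have "\<dots> = L * int (card (Z \<inter> C))" using sum_ind[OF Z(1)] .
    also have "Z \<inter> C = C" using Z by blast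
    finally show ?thesis by (simp add: c_def)
  qed
  have hle: "(\<Sum>x\<in>Z. h x) \<le> L * int (card (Z \<inter> C))" if "finite Z" for Z
  proof -
    have "(\<Sum>x\<in>Z. h x) \<le> (\<Sum>x\<in>Z. if x \<in> C then L else 0)"
      by (rule sum_mono) (use Lpos in \<open>auto simp: h_def\<close>)
    then show ?thesis using sum_ind[OF that] by simp
  qed
  have hnF: "(\<Sum>x\<in>Z. h x) \<le> L * c - L" if ZD: "Z \<in> Dm" and ZnF: "Z \<notin> F" for Z
  proof -
    have Z: "finite Z" "Z \<subseteq> E" using Dm_fin[OF ZD] by auto
    have fC: "finite C" using CE finE finite_subset by blast
    show ?thesis
    proof (cases "C \<subseteq> Z")
      case False
      then have "Z \<inter> C \<subset> C" by blast
      then have "card (Z \<inter> C) < card C" using fC by (simp add: psubset_card_mono)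
      then have "int (card (Z \<inter> C)) \<le> c - 1" unfolding c_def by linarith
      then have "L * int (card (Z \<inter> C)) \<le> L * (c - 1)" using Lpos by (simp add: mult_left_mono)
      then show ?thesis using hle[OF Z(1)] by (simp add: algebra_simps)
    next
      case True
      then obtain x0 where x0: "x0 \<in> Z" "x0 \<notin> C \<union> S" using ZnF ZD unfolding F_def by blast
      have hx0: "h x0 = - L" using x0 Z by (auto simp: h_def)
      have s1: "(\<Sum>x\<in>Z. h x) = h x0 + (\<Sum>x\<in>Z - {x0}. h x)" using sum.remove[OF Z(1) x0(1)] .
      have s2: "(\<Sum>x\<in>Z - {x0}. h x) \<le> L * int (card ((Z - {x0}) \<inter> C))" using hle Z(1) by simp
      have "card ((Z - {x0}) \<inter> C) \<le> card C" using fC by (intro card_mono) auto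
      then have s3: "int (card ((Z - {x0}) \<inter> C)) \<le> c" unfolding c_def by simp
      have s4: "L * int (card ((Z - {x0}) \<inter> C)) \<le> L * c" by (rule mult_left_mono[OF s3 Lpos])
      show ?thesis using s1 s2 s4 hx0 by linarith
    qed
  qed
  define fs where "fs Z = (\<Sum>x\<in>Z. s x) - wt Z" for Z
  define f where "f Z = (\<Sum>x\<in>Z. \<alpha> x) - wt Z" for Z
  have ff: "f Z = fs Z + (\<Sum>x\<in>Z. h x)" for Z unfolding f_def fs_def \<alpha>_def by (simp add: sum.distrib)
  have fsb: "\<bar>fs Z\<bar> \<le> T + K" if "Z \<in> Dm" for Z using T0[OF that] K0[OF that] unfolding fs_def by linarith
  have LL: "L > 2 * T + 2 * K" unfolding L_def by simp
  obtain Z0 where Z0: "Z0 \<in> F" using Fne unfolding F_def by blast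
  have FD: "F \<subseteq> Dm" unfolding F_def by blast
  have Z0D: "Z0 \<in> Dm" using Z0 FD by blast
  have hZ0: "f Z0 = fs Z0 + L * c" using hF[OF Z0] ff[of Z0] by simp
  have eq: "Z \<in> M \<alpha> \<longleftrightarrow> Z \<in> F \<and> (\<forall>Z'\<in>F. fs Z' \<le> fs Z)" for Z
  proof -
    have "Z \<in> M \<alpha> \<longleftrightarrow> Z \<in> Dm \<and> (\<forall>Z'\<in>Dm. f Z' \<le> f Z)" using M_amax[OF a] unfolding f_def by blast
    also have "\<dots> \<longleftrightarrow> Z \<in> F \<and> (\<forall>Z'\<in>F. fs Z' \<le> fs Z)"
    proof
      assume h1: "Z \<in> Dm \<and> (\<forall>Z'\<in>Dm. f Z' \<le> f Z)"
      have ZD: "Z \<in> Dm" using h1 by blast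
      have ZF: "Z \<in> F"
      proof (rule ccontr)
        assume nF: "Z \<notin> F"
        have "f Z \<le> fs Z + L * c - L" using hnF[OF ZD nF] ff[of Z] by linarith
        moreover have "f Z0 \<le> f Z" using h1 Z0D by blast
        ultimately show False using fsb[OF ZD] fsb[OF Z0D] hZ0 LL by linarith
      qed
      have hZ: "f Z = fs Z + L * c" using hF[OF ZF] ff[of Z] by simp
      have "\<forall>Z'\<in>F. fs Z' \<le> fs Z"
      proof
        fix Z' assume Z': "Z' \<in> F"
        have "f Z' \<le> f Z" using h1 Z' FD by blast
        moreover have "f Z' = fs Z' + L * c" using hF[OF Z'] ff[of Z'] by simp
        ultimately show "fs Z' \<le> fs Z" using hZ by linarith
      qed
      then show "Z \<in> F \<and> (\<forall>Z'\<in>F. fs Z' \<le> fs Z)" using ZF by blast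
    next
      assume h1: "Z \<in> F \<and> (\<forall>Z'\<in>F. fs Z' \<le> fs Z)"
      have ZF: "Z \<in> F" using h1 by blast
      have ZD: "Z \<in> Dm" using ZF FD by blast
      have hZ: "f Z = fs Z + L * c" using hF[OF ZF] ff[of Z] by simp
      have "f Z' \<le> f Z" if Z': "Z' \<in> Dm" for Z'
      proof (cases "Z' \<in> F")
        case True
        have "f Z' = fs Z' + L * c" using hF[OF True] ff[of Z'] by simp
        moreover have "fs Z' \<le> fs Z" using h1 True by blast
        ultimately show ?thesis using hZ by linarith
      next
        case False
        have "f Z' \<le> fs Z' + L * c - L" using hnF[OF Z' False] ff[of Z'] by linarith
        then show ?thesis using fsb[OF Z'] fsb[OF ZD] hZ LL by linarith
      qed
      then show "Z \<in> Dm \<and> (\<forall>Z'\<in>Dm. f Z' \<le> f Z)" using ZD by blast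
    qed
    finally show ?thesis .
  qed
  show ?thesis
  proof (rule bexI[OF _ a], rule allI)
    fix Z
    have e1: "Z \<in> F \<longleftrightarrow> (Z \<in> Dm \<and> C \<subseteq> Z \<and> Z \<subseteq> C \<union> S)" unfolding F_def by simp
    have e2: "(\<forall>Z'\<in>F. fs Z' \<le> fs Z) \<longleftrightarrow> (\<forall>Z'. Z' \<in> Dm \<and> C \<subseteq> Z' \<and> Z' \<subseteq> C \<union> S \<longrightarrow> (\<Sum>x\<in>Z'. s x) - wt Z' \<le> (\<Sum>x\<in>Z. s x) - wt Z)"
      unfolding F_def fs_def by blast
    show "Z \<in> M \<alpha> \<longleftrightarrow> (Z \<in> Dm \<and> C \<subseteq> Z \<and> Z \<subseteq> C \<union> S) \<and>
     (\<forall>Z'. Z' \<in> Dm \<and> C \<subseteq> Z' \<and> Z' \<subseteq> C \<union> S \<longrightarrow> (\<Sum>x\<in>Z'. s x) - wt Z' \<le> (\<Sum>x\<in>Z. s x) - wt Z)"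
      using eq[of Z] e1 e2 by simp
  qed
qed

end

context flk begin

definition exch :: "'a set \<Rightarrow> 'a set \<Rightarrow> 'a \<Rightarrow> bool" where
  "exch X Y u \<longleftrightarrow> (\<exists>v\<in>Y - X. insert v (X - {u}) \<in> Dm \<and> insert u Y - {v} \<in> Dm \<and>
      wt (insert v (X - {u})) + wt (insert u Y - {v}) \<le> wt X + wt Y)"

lemma sum_s_pair:
  fixes s :: "'a \<Rightarrow> int"
  assumes "finite C" "p \<notin> C" "q \<notin> C" "p \<noteq> q" "\<And>x. x \<in> C \<Longrightarrow> s x = 0"
  shows "(\<Sum>x\<in>insert p (insert q C). s x) = s p + s q"
proof -
  have "(\<Sum>x\<in>C. s x) = 0" using assms(5) by simp
  then show ?thesis using assms by simp
qed

lemma loc: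
  assumes XD: "X \<in> Dm" and YD: "Y \<in> Dm" and PX: "X - Y = {a, u}" and au: "a \<noteq> u"
    and QY: "Y - X = {b, v}" and bv: "b \<noteq> v"
  shows "exch X Y u"
proof (rule ccontr)
  assume nex: "\<not> exch X Y u"
  define C where "C = X \<inter> Y"
  have XC: "X = insert a (insert u C)" using PX unfolding C_def by blast
  have YC: "Y = insert b (insert v C)" using QY unfolding C_def by blast
  have dis: "a \<notin> C" "u \<notin> C" "b \<notin> C" "v \<notin> C" "a \<noteq> b" "a \<noteq> v" "u \<noteq> b" "u \<noteq> v"
    using PX QY unfolding C_def by blast+
  have XE: "X \<subseteq> E" and YE: "Y \<subseteq> E" using Dm_fin XD YD by auto
  have fC: "finite C" using Dm_fin[OF XD] unfolding C_def by auto
  define Sab where "Sab = insert a (insert b C)"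
  define Suv where "Suv = insert u (insert v C)"
  define Sav where "Sav = insert a (insert v C)"
  define Sub where "Sub = insert u (insert b C)"
  have e1: "insert b (X - {u}) = Sab" unfolding Sab_def XC using dis au by auto
  have e2: "insert u Y - {b} = Suv" unfolding Suv_def YC using dis bv by auto
  have e3: "insert v (X - {u}) = Sav" unfolding Sav_def XC using dis au by auto
  have e4: "insert u Y - {v} = Sub" unfolding Sub_def YC using dis bv by auto
  have bQ: "b \<in> Y - X" and vQ: "v \<in> Y - X" using QY by auto
  have fb: "\<not> (Sab \<in> Dm \<and> Suv \<in> Dm \<and> wt Sab + wt Suv \<le> wt X + wt Y)"
    using nex bQ e1 e2 unfolding exch_def by metis
  have fv: "\<not> (Sav \<in> Dm \<and> Sub \<in> Dm \<and> wt Sav + wt Sub \<le> wt X + wt Y)"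
    using nex vQ e3 e4 unfolding exch_def by metis
  define x1 where "x1 = wt X"
  define y1 where "y1 = wt Y"
  define \<sigma> where "\<sigma> = (if Suv \<in> Dm then x1 + y1 - wt Suv else if Sab \<in> Dm then wt Sab - 1 else 0)"
  define \<delta>1 where "\<delta>1 = (if Sub \<in> Dm then x1 - wt Sub else if Sav \<in> Dm then wt Sav - y1 - 1 else 0)"
  define \<delta> where "\<delta> = \<delta>1 + (\<sigma> + \<delta>1) mod 2"
  define sa where "sa = (\<sigma> + \<delta>) div 2"
  define sb where "sb = (\<sigma> - \<delta>) div 2"
  define su where "su = x1 - sa"
  define sv where "sv = y1 - sb"
  have ss: "sa + sb = \<sigma> \<and> sa - sb = \<delta>" unfolding sa_def sb_def \<delta>_def by presburger
  have dd: "\<delta>1 \<le> \<delta> \<and> \<delta> \<le> \<delta>1 + 1" unfolding \<delta>_def by presburger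
  have cab: "sa + sb \<le> wt Sab" if "Sab \<in> Dm"
    using ss fb that unfolding \<sigma>_def x1_def y1_def by (cases "Suv \<in> Dm") auto
  have cuv: "su + sv \<le> wt Suv" if "Suv \<in> Dm"
    using ss that unfolding \<sigma>_def su_def sv_def by auto
  have cav: "sa + sv \<le> wt Sav" if "Sav \<in> Dm"
    using ss dd fv that unfolding \<delta>1_def sv_def x1_def y1_def by (cases "Sub \<in> Dm") auto
  have cub: "su + sb \<le> wt Sub" if "Sub \<in> Dm"
    using ss dd that unfolding \<delta>1_def su_def by auto
  define s where "s x = (if x = a then sa else if x = u then su else if x = b then sb else if x = v then sv else 0)" for x
  define S where "S = {a, u, b, v}"
  have CS: "C \<inter> S = {}" using dis unfolding S_def by auto
  have CE: "C \<subseteq> E" using XE unfolding C_def by blast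
  have SE: "S \<subseteq> E" using XE YE XC YC unfolding S_def by blast
  have s0: "s x = 0" if "x \<notin> S" for x using that unfolding s_def S_def by auto
  have sC: "s x = 0" if "x \<in> C" for x using that dis unfolding s_def by auto
  have sva: "s a = sa" "s u = su" "s b = sb" "s v = sv" using dis au bv unfolding s_def by auto
  have sX: "(\<Sum>x\<in>X. s x) = sa + su" unfolding XC using sum_s_pair[of C a u s, OF fC dis(1,2) au sC] sva by simp
  have sY: "(\<Sum>x\<in>Y. s x) = sb + sv" unfolding YC using sum_s_pair[of C b v s, OF fC dis(3,4) bv sC] sva by simp
  have sab: "(\<Sum>x\<in>Sab. s x) = sa + sb" unfolding Sab_def using sum_s_pair[of C a b s, OF fC dis(1,3,5) sC] sva by simp
  have suv: "(\<Sum>x\<in>Suv. s x) = su + sv" unfolding Suv_def using sum_s_pair[of C u v s, OF fC dis(2,4,8) sC] sva by simp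
  have sav: "(\<Sum>x\<in>Sav. s x) = sa + sv" unfolding Sav_def using sum_s_pair[of C a v s, OF fC dis(1,4,6) sC] sva by simp
  have sub: "(\<Sum>x\<in>Sub. s x) = su + sb" unfolding Sub_def using sum_s_pair[of C u b s, OF fC dis(2,3,7) sC] sva by simp
  have fX: "(\<Sum>x\<in>X. s x) - wt X = 0" using sX unfolding su_def x1_def by simp
  have fY: "(\<Sum>x\<in>Y. s x) - wt Y = 0" using sY unfolding sv_def y1_def by simp
  have six: "Z \<in> {X, Y, Sab, Suv, Sav, Sub}" if Z: "Z \<in> Dm" "C \<subseteq> Z" "Z \<subseteq> C \<union> S" for Z
  proof -
    have cZ: "card Z = card X" using Dm_fin Z(1) XD by simp
    have fZ: "finite Z" using Dm_fin Z(1) by simp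
    have "card X = card C + 2" using XC dis fC au by simp
    then have "card (Z - C) = 2" using cZ card_Diff_subset[OF fC Z(2)] by simp
    then obtain p q where pq: "Z - C = {p, q}" "p \<noteq> q" by (meson card_2_iff)
    have ZZ: "Z = insert p (insert q C)" using pq Z(2) by blast
    have "p \<in> S" "q \<in> S" using pq Z(3) by blast+
    then show ?thesis using pq(2) unfolding ZZ S_def XC YC Sab_def Suv_def Sav_def Sub_def
      by (auto simp: insert_commute)
  qed
  have allle: "(\<Sum>x\<in>Z. s x) - wt Z \<le> 0" if Z: "Z \<in> Dm" "C \<subseteq> Z" "Z \<subseteq> C \<union> S" for Z
  proof -
    have "Z \<in> {X, Y, Sab, Suv, Sav, Sub}" using six[OF Z] .
    then show ?thesis using fX fY sab suv sav sub cab cuv cav cub Z(1) by auto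
  qed
  have XF: "C \<subseteq> X \<and> X \<subseteq> C \<union> S" unfolding XC S_def by blast
  have YF: "C \<subseteq> Y \<and> Y \<subseteq> C \<union> S" unfolding YC S_def by blast
  have Fne: "\<exists>Z\<in>Dm. C \<subseteq> Z \<and> Z \<subseteq> C \<union> S" using XD XF by blast
  obtain \<alpha> where a: "\<alpha> \<in> zvec E" and char: "\<forall>Z. Z \<in> M \<alpha> \<longleftrightarrow> (Z \<in> Dm \<and> C \<subseteq> Z \<and> Z \<subseteq> C \<union> S) \<and>
     (\<forall>Z'. Z' \<in> Dm \<and> C \<subseteq> Z' \<and> Z' \<subseteq> C \<union> S \<longrightarrow> (\<Sum>x\<in>Z'. s x) - wt Z' \<le> (\<Sum>x\<in>Z. s x) - wt Z)"
    using localize[where C=C and S=S and s=s, OF CS CE SE s0 Fne] by blast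
  have XM: "X \<in> M \<alpha>"
  proof -
    have "\<forall>Z'. Z' \<in> Dm \<and> C \<subseteq> Z' \<and> Z' \<subseteq> C \<union> S \<longrightarrow> (\<Sum>x\<in>Z'. s x) - wt Z' \<le> (\<Sum>x\<in>X. s x) - wt X"
      using allle fX by simp
    then show ?thesis using char XD XF by blast
  qed
  have YM: "Y \<in> M \<alpha>"
  proof -
    have "\<forall>Z'. Z' \<in> Dm \<and> C \<subseteq> Z' \<and> Z' \<subseteq> C \<union> S \<longrightarrow> (\<Sum>x\<in>Z'. s x) - wt Z' \<le> (\<Sum>x\<in>Y. s x) - wt Y"
      using allle fY by simp
    then show ?thesis using char YD YF by blast
  qed
  have opt: "(\<Sum>x\<in>Z. s x) - wt Z = 0 \<and> Z \<in> Dm" if ZM: "Z \<in> M \<alpha>" for Z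
  proof -
    have cz: "(Z \<in> Dm \<and> C \<subseteq> Z \<and> Z \<subseteq> C \<union> S) \<and>
     (\<forall>Z'. Z' \<in> Dm \<and> C \<subseteq> Z' \<and> Z' \<subseteq> C \<union> S \<longrightarrow> (\<Sum>x\<in>Z'. s x) - wt Z' \<le> (\<Sum>x\<in>Z. s x) - wt Z)"
      using char ZM by blast
    then have h: "Z \<in> Dm" "C \<subseteq> Z" "Z \<subseteq> C \<union> S" by auto
    have h2: "(\<Sum>x\<in>X. s x) - wt X \<le> (\<Sum>x\<in>Z. s x) - wt Z" using cz XD XF by blast
    show ?thesis using allle[OF h] h2 fX h(1) by linarith
  qed
  have n1: "\<not> (Sab \<in> M \<alpha> \<and> Suv \<in> M \<alpha>)"
  proof
    assume h: "Sab \<in> M \<alpha> \<and> Suv \<in> M \<alpha>"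
    then have "Sab \<in> Dm" "Suv \<in> Dm" "wt Sab + wt Suv \<le> wt X + wt Y"
      using opt[of Sab] opt[of Suv] sab suv unfolding su_def sv_def x1_def y1_def by auto
    then show False using fb by blast
  qed
  have n2: "\<not> (Sav \<in> M \<alpha> \<and> Sub \<in> M \<alpha>)"
  proof
    assume h: "Sav \<in> M \<alpha> \<and> Sub \<in> M \<alpha>"
    then have "Sav \<in> Dm" "Sub \<in> Dm" "wt Sav + wt Sub \<le> wt X + wt Y"
      using opt[of Sav] opt[of Sub] sav sub unfolding su_def sv_def x1_def y1_def by auto
    then show False using fv by blast
  qed
  have uXY: "u \<in> X - Y" and aXY: "a \<in> X - Y" using PX by auto
  obtain y where y: "y \<in> Y - X" "insert y (X - {u}) \<in> M \<alpha>" using exch_ax[OF a XM YM uXY] by blast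
  have x1': "Sab \<in> M \<alpha> \<or> Sav \<in> M \<alpha>" using y QY e1 e3 by auto
  obtain y where y: "y \<in> Y - X" "insert y (X - {a}) \<in> M \<alpha>" using exch_ax[OF a XM YM aXY] by blast
  have "insert b (X - {a}) = Sub" "insert v (X - {a}) = Suv"
    unfolding Sub_def Suv_def XC using dis au by auto
  then have x2: "Sub \<in> M \<alpha> \<or> Suv \<in> M \<alpha>" using y QY by auto
  obtain y where y: "y \<in> X - Y" "insert y (Y - {b}) \<in> M \<alpha>" using exch_ax[OF a YM XM bQ] by blast
  have "insert a (Y - {b}) = Sav" "insert u (Y - {b}) = Suv"
    unfolding Sav_def Suv_def YC using dis bv by auto
  then have x3: "Sav \<in> M \<alpha> \<or> Suv \<in> M \<alpha>" using y PX by auto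
  obtain y where y: "y \<in> X - Y" "insert y (Y - {v}) \<in> M \<alpha>" using exch_ax[OF a YM XM vQ] by blast
  have "insert a (Y - {v}) = Sab" "insert u (Y - {v}) = Sub"
    unfolding Sab_def Sub_def YC using dis bv by auto
  then have x4: "Sab \<in> M \<alpha> \<or> Sub \<in> M \<alpha>" using y PX by auto
  show False using x1' x2 x3 x4 n1 n2 by blast
qed

end

context flk begin

lemma domex:
  assumes XD: "X \<in> Dm" and YD: "Y \<in> Dm" and aXY: "a \<in> X - Y"
  shows "\<exists>b\<in>Y - X. insert a (Y - {b}) \<in> Dm"
proof -
  define C where "C = X \<inter> Y"
  define Q where "Q = Y - X"
  define S where "S = (X - Y) \<union> Q"
  define K where "K = (\<Sum>Z\<in>Dm. \<bar>wt Z\<bar>)"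
  define t where "t = 2 * K + 1"
  define q where "q = int (card Q)"
  have K0: "\<bar>wt Z\<bar> \<le> K" if "Z \<in> Dm" for Z
    unfolding K_def using member_le_sum[of Z Dm "\<lambda>Z. \<bar>wt Z\<bar>"] that finite_Dm by simp
  have Kp: "K \<ge> 0" unfolding K_def by (simp add: sum_nonneg)
  define F where "F = {Z\<in>Dm. C \<subseteq> Z \<and> Z \<subseteq> C \<union> S}"
  define Fa where "Fa = {Z\<in>F. a \<in> Z}"
  have XE: "X \<subseteq> E" "finite X" and YE: "Y \<subseteq> E" "finite Y" using Dm_fin XD YD by auto
  have cXY: "card X = card Y" using Dm_fin XD YD by simp
  have XF: "X \<in> F" unfolding F_def C_def S_def Q_def using XD by blast
  have YF: "Y \<in> F" unfolding F_def C_def S_def Q_def using YD by blast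
  have XFa: "X \<in> Fa" using XF aXY unfolding Fa_def by blast
  have fFa: "finite Fa" using finite_Dm unfolding Fa_def F_def by simp
  define g where "g Z = t * int (card (Z \<inter> Q)) - wt Z" for Z
  obtain Zs where Zs: "Zs \<in> Fa" "\<forall>Z\<in>Fa. g Z \<le> g Zs" using finite_argmax[OF fFa, of g] XFa by blast
  define t' where "t' = (t * q - wt Y) - g Zs"
  define s where "s x = (if x \<in> Q then t else 0) + (if x = a then t' else 0)" for x
  have s0: "s x = 0" if "x \<notin> S" for x using that aXY unfolding s_def S_def by auto
  have sumZ: "(\<Sum>x\<in>Z. s x) = t * int (card (Z \<inter> Q)) + (if a \<in> Z then t' else 0)" if "finite Z" for Z
  proof -
    have "(\<Sum>x\<in>Z. s x) = (\<Sum>x\<in>Z. if x \<in> Q then t else 0) + (\<Sum>x\<in>Z. if x = a then t' else 0)"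
      unfolding s_def by (simp add: sum.distrib)
    moreover have "(\<Sum>x\<in>Z. if x = a then t' else 0) = (if a \<in> Z then t' else 0)"
      using that by (simp add: sum.delta')
    ultimately show ?thesis using sum_ind[OF that] by simp
  qed
  define fs where "fs Z = (\<Sum>x\<in>Z. s x) - wt Z" for Z
  have YQ: "Y \<inter> Q = Q" unfolding Q_def by blast
  have aY: "a \<notin> Y" using aXY by blast
  have fsY: "fs Y = t * q - wt Y" unfolding fs_def using sumZ[OF YE(2)] YQ aY by (simp add: q_def)
  have le: "fs Z \<le> fs Y" if ZF: "Z \<in> F" for Z
  proof (cases "a \<in> Z")
    case True
    then have "Z \<in> Fa" using ZF unfolding Fa_def by blast
    then have "g Z \<le> g Zs" using Zs by blast
    moreover have "fs Z = g Z + t'" using sumZ True ZF Dm_fin unfolding fs_def g_def F_def by auto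
    ultimately show ?thesis using fsY unfolding t'_def by linarith
  next
    case False
    show ?thesis
    proof (cases "Z = Y")
      case True then show ?thesis by simp
    next
      case ZY: False
      have Z: "Z \<in> Dm" "C \<subseteq> Z" "Z \<subseteq> C \<union> S" using ZF unfolding F_def by auto
      have fZ: "finite Z" "card Z = card Y" using Dm_fin Z(1) YD by auto
      have "\<not> Q \<subseteq> Z"
      proof
        assume "Q \<subseteq> Z"
        then have "Y \<subseteq> Z" using Z(2) unfolding C_def Q_def by blast
        then have "Y = Z" using card_subset_eq[OF fZ(1)] fZ(2) by simp
        then show False using ZY by simp
      qed
      then have "Z \<inter> Q \<subset> Q" by blast
      moreover have "finite Q" unfolding Q_def using YE by simp
      ultimately have "card (Z \<inter> Q) < card Q" by (simp add: psubset_card_mono)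
      then have "int (card (Z \<inter> Q)) \<le> q - 1" unfolding q_def by linarith
      moreover have "t \<ge> 0" unfolding t_def using Kp by simp
      ultimately have "t * int (card (Z \<inter> Q)) \<le> t * (q - 1)" by (simp add: mult_left_mono)
      moreover have "fs Z = t * int (card (Z \<inter> Q)) - wt Z" using sumZ[OF fZ(1)] False unfolding fs_def by simp
      ultimately show ?thesis using fsY K0[OF Z(1)] K0[OF YD] unfolding t_def by (simp add: algebra_simps)
    qed
  qed
  have ZsF: "Zs \<in> F" "a \<in> Zs" using Zs unfolding Fa_def by auto
  have fsZs: "fs Zs = fs Y"
  proof -
    have "fs Zs = g Zs + t'" using sumZ ZsF Dm_fin unfolding fs_def g_def F_def by auto
    then show ?thesis using fsY unfolding t'_def by linarith
  qed
  have CS: "C \<inter> S = {}" unfolding C_def S_def Q_def by blast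
  have CE: "C \<subseteq> E" using XE unfolding C_def by blast
  have SE: "S \<subseteq> E" using XE YE unfolding S_def Q_def by blast
  have Fne: "\<exists>Z\<in>Dm. C \<subseteq> Z \<and> Z \<subseteq> C \<union> S" using XF unfolding F_def by blast
  obtain \<alpha> where a: "\<alpha> \<in> zvec E" and char: "\<forall>Z. Z \<in> M \<alpha> \<longleftrightarrow> (Z \<in> Dm \<and> C \<subseteq> Z \<and> Z \<subseteq> C \<union> S) \<and>
     (\<forall>Z'. Z' \<in> Dm \<and> C \<subseteq> Z' \<and> Z' \<subseteq> C \<union> S \<longrightarrow> (\<Sum>x\<in>Z'. s x) - wt Z' \<le> (\<Sum>x\<in>Z. s x) - wt Z)"
    using localize[where C=C and S=S and s=s, OF CS CE SE s0 Fne] by blast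
  have allF: "\<forall>Z'. Z' \<in> Dm \<and> C \<subseteq> Z' \<and> Z' \<subseteq> C \<union> S \<longrightarrow> fs Z' \<le> fs Y"
    using le unfolding F_def by blast
  have YM: "Y \<in> M \<alpha>" using char YF allF unfolding F_def fs_def by blast
  have ZsM: "Zs \<in> M \<alpha>" using char ZsF allF fsZs unfolding F_def fs_def by (metis (no_types, lifting) mem_Collect_eq)
  have "a \<in> Zs - Y" using ZsF aY by blast
  then obtain x where x: "x \<in> Y - Zs" "insert a (Y - {x}) \<in> M \<alpha>"
    using dual_exch[OF mat[OF a] finE YM ZsM] by blast
  have "x \<in> Y - X" using x(1) ZsF unfolding F_def C_def by blast
  then show ?thesis using x(2) M_sub_Dm[OF a] by blast
qed

end

context flk begin

lemma exch_all:
  shows "X \<in> Dm \<Longrightarrow> Y \<in> Dm \<Longrightarrow> u \<in> X - Y \<Longrightarrow> exch X Y u"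
proof (induction "card (X - Y)" arbitrary: X Y u rule: less_induct)
  case less
  have XD: "X \<in> Dm" and YD: "Y \<in> Dm" and uXY: "u \<in> X - Y" using less.prems by auto
  have fX: "finite X" and fY: "finite Y" and cXY: "card X = card Y" using Dm_fin XD YD by auto
  have cs: "card (X - Y) = card (Y - X)" using card_diff_sym[OF fX fY cXY] .
  have k1: "card (X - Y) \<ge> 1" using uXY fX by (metis One_nat_def Suc_leI card_gt_0_iff empty_iff finite_Diff)
  consider (one) "card (X - Y) = 1" | (two) "card (X - Y) = 2" | (many) "card (X - Y) \<ge> 3" using k1 by linarith
  then show ?case
  proof cases
    case one
    then have XY: "X - Y = {u}" using uXY by (metis card_1_singletonE singletonD)
    obtain v where YX: "Y - X = {v}" using one cs by (metis card_1_singletonE)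
    have e1: "insert v (X - {u}) = Y" using XY YX by blast
    have e2: "insert u Y - {v} = X" using XY YX by blast
    show ?thesis unfolding exch_def using e1 e2 XD YD YX by auto
  next
    case two
    then obtain p q where pq: "X - Y = {p, q}" "p \<noteq> q" by (meson card_2_iff)
    obtain a where PX: "X - Y = {a, u}" "a \<noteq> u" using pq uXY by auto
    obtain b v where QY: "Y - X = {b, v}" "b \<noteq> v" using two cs by (metis card_2_iff)
    show ?thesis using loc[OF XD YD PX QY] .
  next
    case many
    have "card ((X - Y) - {u}) \<ge> 2" using many uXY fX by simp
    then obtain a where aX: "a \<in> (X - Y) - {u}" by (metis card.empty ex_in_conv not_numeral_le_zero)
    have aXY: "a \<in> X - Y" and au: "a \<noteq> u" using aX by auto
    define Qf where "Qf = {x\<in>Y - X. insert a (Y - {x}) \<in> Dm}"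
    define Qf2 where "Qf2 = {x\<in>Qf. insert x (X - {u}) \<in> Dm}"
    define c where "c x = wt (insert x (X - {u})) + wt (insert a (Y - {x}))" for x
    have Qfne: "Qf \<noteq> {}" using domex[OF XD YD aXY] unfolding Qf_def by blast
    have fQf2: "finite Qf2" unfolding Qf2_def Qf_def using fY by simp
    obtain b where bQf: "b \<in> Qf" and bmin: "Qf2 \<noteq> {} \<longrightarrow> b \<in> Qf2 \<and> (\<forall>x\<in>Qf2. c b \<le> c x)"
    proof (cases "Qf2 = {}")
      case True then show ?thesis using that Qfne by blast
    next
      case False
      obtain b where "b \<in> Qf2" "\<forall>x\<in>Qf2. (\<lambda>x. - c x) x \<le> (\<lambda>x. - c x) b"
        using finite_argmax[OF fQf2 False, of "\<lambda>x. - c x"] by blast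
      then show ?thesis using that unfolding Qf2_def by force
    qed
    have bQ: "b \<in> Y - X" using bQf unfolding Qf_def by blast
    define Y' where "Y' = insert a (Y - {b})"
    have Y'D: "Y' \<in> Dm" using bQf unfolding Qf_def Y'_def by blast
    have XY': "X - Y' = (X - Y) - {a}" unfolding Y'_def using bQ by blast
    have lt1: "card (X - Y') < card (X - Y)" unfolding XY' by (rule card_Diff1_less) (use aXY fX in auto)
    have uXY': "u \<in> X - Y'" unfolding XY' using uXY au by blast
    have ex1: "exch X Y' u" using less.hyps[OF lt1 XD Y'D uXY'] .
    then obtain v where v: "v \<in> Y' - X" "insert v (X - {u}) \<in> Dm" "insert u Y' - {v} \<in> Dm"
      "wt (insert v (X - {u})) + wt (insert u Y' - {v}) \<le> wt X + wt Y'"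
      unfolding exch_def by blast
    have vQ: "v \<in> Y - X" "v \<noteq> b" using v(1) aXY unfolding Y'_def by auto
    define Z where "Z = insert u Y' - {v}"
    have ZD: "Z \<in> Dm" using v(3) Z_def by simp
    have ZY: "Z - Y = {a, u}" unfolding Z_def Y'_def using aXY uXY vQ bQ au by auto
    have YZ: "Y - Z = {b, v}" unfolding Z_def Y'_def using aXY uXY vQ bQ au by auto
    have lt2: "card (Z - Y) < card (X - Y)" using ZY au many by simp
    have aZY: "a \<in> Z - Y" using ZY by blast
    have ex2: "exch Z Y a" using less.hyps[OF lt2 ZD YD aZY] .
    then obtain x where x: "x \<in> Y - Z" "insert x (Z - {a}) \<in> Dm" "insert a Y - {x} \<in> Dm"
      "wt (insert x (Z - {a})) + wt (insert a Y - {x}) \<le> wt Z + wt Y"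
      unfolding exch_def by blast
    have xbv: "x = b \<or> x = v" using x(1) YZ by blast
    show ?thesis
    proof (cases "x = b")
      case True
      have z1: "insert x (Z - {a}) = insert u Y - {v}"
        unfolding True Z_def Y'_def using aXY uXY vQ bQ au by auto
      have y1: "insert a Y - {x} = Y'" unfolding True Y'_def using aXY bQ by auto
      have "wt (insert v (X - {u})) + wt (insert u Y - {v}) \<le> wt X + wt Y"
        using v(4) x(4) z1 y1 Z_def by simp
      then show ?thesis unfolding exch_def using vQ(1) v(2) x(3) x(2) z1 by auto
    next
      case False
      then have xv: "x = v" using xbv by simp
      have z1: "insert x (Z - {a}) = insert u Y - {b}"
        unfolding xv Z_def Y'_def using aXY uXY vQ bQ au by auto
      have y1: "insert a Y - {x} = insert a (Y - {v})" unfolding xv using aXY vQ by auto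
      have vQf2: "v \<in> Qf2" unfolding Qf2_def Qf_def using vQ(1) x(3) y1 v(2) by auto
      then have bQf2: "b \<in> Qf2" and cb: "c b \<le> c v" using bmin by auto
      have bX: "insert b (X - {u}) \<in> Dm" using bQf2 unfolding Qf2_def by blast
      have cb': "wt (insert b (X - {u})) + wt Y' \<le> wt (insert v (X - {u})) + wt (insert a (Y - {v}))"
        using cb unfolding c_def Y'_def .
      have "wt (insert b (X - {u})) + wt (insert u Y - {b}) \<le> wt X + wt Y"
        using v(4) x(4) z1 y1 cb' Z_def by simp
      then show ?thesis unfolding exch_def using bQ bX x(2) z1 by auto
    qed
  qed
qed

lemma nu_val: "matroid_valuation E d nu"
proof -
  have V0: "\<forall>B\<in>dsubsets E d. nu B \<noteq> -\<infinity>" by (simp add: nu_def)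
  have V1: "\<exists>B\<in>dsubsets E d. nu B < \<infinity>" using Dm_ne Dm_sub by (auto simp: nu_def)
  have V2: "\<exists>j\<in>B' - B. nu B + nu B' \<ge> nu (insert j (B - {i})) + nu (insert i B' - {j})"
    if B: "B \<in> dsubsets E d" and B': "B' \<in> dsubsets E d" and i: "i \<in> B - B'" for B B' i
  proof (cases "B \<in> Dm \<and> B' \<in> Dm")
    case True
    then have "exch B B' i" using exch_all i by blast
    then obtain v where v: "v \<in> B' - B" "insert v (B - {i}) \<in> Dm" "insert i B' - {v} \<in> Dm"
      "wt (insert v (B - {i})) + wt (insert i B' - {v}) \<le> wt B + wt B'"
      unfolding exch_def by blast
    have "nu (insert v (B - {i})) + nu (insert i B' - {v}) \<le> nu B + nu B'"
      using v True by (simp add: nu_def)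
    then show ?thesis using v(1) by blast
  next
    case False
    have fB: "finite B" "finite B'" "card B = card B'" using B B' finE
      by (auto simp: dsubsets_def intro: finite_subset)
    have "card (B' - B) = card (B - B')" using card_diff_sym[OF fB(2) fB(1)] fB(3) by simp
    moreover have "card (B - B') > 0" using i fB(1) by (metis card_gt_0_iff empty_iff finite_Diff)
    ultimately obtain j where j: "j \<in> B' - B" by (metis card.empty ex_in_conv less_irrefl)
    have "nu B + nu B' = \<infinity>" using False by (auto simp: nu_def)
    then show ?thesis using j by auto
  qed
  show ?thesis unfolding matroid_valuation_def using V0 V1 V2 by blast
qed

end

lemma rev_dir:
  fixes E :: "'a set" and d :: nat and M :: "('a \<Rightarrow> int) \<Rightarrow> 'a set set" and \<nu> :: "'a set \<Rightarrow> ereal"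
  assumes fE: "finite E" and mat: "\<forall>\<alpha>\<in>zvec E. matroid_of_rank E d (M \<alpha>)"
    and val: "matroid_valuation E d \<nu>"
    and int: "\<forall>B\<in>dsubsets E d. \<nu> B = \<infinity> \<or> (\<exists>z::int. \<nu> B = ereal (of_int z))"
    and vb: "\<forall>\<alpha>\<in>zvec E. M \<alpha> = val_bases E d \<nu> (\<lambda>i. real_of_int (\<alpha> i))"
  shows "matroid_flock E d M"
proof -
  define Dn where "Dn = {B\<in>dsubsets E d. \<nu> B \<noteq> \<infinity>}"
  define z where "z B = (SOME z::int. \<nu> B = ereal (of_int z))" for B
  have nuf: "\<forall>B\<in>dsubsets E d. \<nu> B = (if B \<in> Dn then ereal (of_int (z B)) else \<infinity>)"
  proof
    fix B assume B: "B \<in> dsubsets E d"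
    show "\<nu> B = (if B \<in> Dn then ereal (of_int (z B)) else \<infinity>)"
    proof (cases "B \<in> Dn")
      case True
      then have "\<exists>z::int. \<nu> B = ereal (of_int z)" using int B unfolding Dn_def by auto
      then have "\<nu> B = ereal (of_int (z B))" unfolding z_def by (rule someI_ex)
      then show ?thesis using True by simp
    next
      case False then show ?thesis using B unfolding Dn_def by auto
    qed
  qed
  have Dsub: "Dn \<subseteq> dsubsets E d" unfolding Dn_def by blast
  have Dne: "Dn \<noteq> {}" using val unfolding matroid_valuation_def Dn_def by force
  have Dfin: "finite B" "B \<subseteq> E" "card B = d" if "B \<in> Dn" for B
    using that Dsub fE by (auto simp: dsubsets_def intro: finite_subset)
  define f where "f \<beta> B = (\<Sum>x\<in>B. \<beta> x) - z B" for \<beta> :: "'a \<Rightarrow> int" and B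
  have am: "M \<beta> = {B\<in>Dn. \<forall>B'\<in>Dn. f \<beta> B' \<le> f \<beta> B}" if "\<beta> \<in> zvec E" for \<beta>
    using vb that VB[OF fE Dsub Dne nuf, of \<beta>] unfolding f_def by simp
  have Mne: "M \<beta> \<noteq> {}" if "\<beta> \<in> zvec E" for \<beta> using mat that mrank_ne by blast
  have mf1: "mcontract (M \<alpha>) i = mdelete (M (\<lambda>x. \<alpha> x + unitvec {i} x)) i"
    if a: "\<alpha> \<in> zvec E" and i: "i \<in> E" for \<alpha> i
  proof -
    define \<alpha>' where "\<alpha>' = up \<alpha> i"
    have e: "(\<lambda>x. \<alpha> x + unitvec {i} x) = \<alpha>'" unfolding \<alpha>'_def up_def by (rule plus_unit)
    have a': "\<alpha>' \<in> zvec E" unfolding \<alpha>'_def using zvec_up[OF a i] .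
    have ff: "f \<alpha>' B = f \<alpha> B + (if i \<in> B then 1 else 0)" if "B \<in> Dn" for B
      using sumB_up[OF Dfin(1)[OF that], of \<alpha> i] unfolding f_def \<alpha>'_def by simp
    let ?N = "M \<alpha>" and ?N' = "M \<alpha>'"
    show ?thesis
    proof (cases "\<exists>B\<in>?N. i \<in> B")
      case True
      then obtain B1 where B1: "B1 \<in> ?N" "i \<in> B1" by blast
      have B1m: "B1 \<in> Dn" "\<forall>B'\<in>Dn. f \<alpha> B' \<le> f \<alpha> B1" using B1(1) am[OF a] by auto
      have N': "?N' = {B\<in>?N. i \<in> B}"
      proof (intro set_eqI iffI)
        fix B assume "B \<in> ?N'"
        then have B: "B \<in> Dn" "\<forall>B'\<in>Dn. f \<alpha>' B' \<le> f \<alpha>' B" using am[OF a'] by auto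
        have "f \<alpha>' B1 \<le> f \<alpha>' B" using B B1m by blast
        then have "f \<alpha> B1 + 1 \<le> f \<alpha> B + (if i \<in> B then 1 else 0)" using ff[OF B1m(1)] ff[OF B(1)] B1(2) by simp
        moreover have "f \<alpha> B \<le> f \<alpha> B1" using B1m B by blast
        ultimately have "i \<in> B" "f \<alpha> B = f \<alpha> B1" by (auto split: if_splits)
        then show "B \<in> {B\<in>?N. i \<in> B}" using am[OF a] B B1m by auto
      next
        fix B assume "B \<in> {B\<in>?N. i \<in> B}"
        then have B: "B \<in> Dn" "\<forall>B'\<in>Dn. f \<alpha> B' \<le> f \<alpha> B" "i \<in> B" using am[OF a] by auto
        have "\<forall>B'\<in>Dn. f \<alpha>' B' \<le> f \<alpha>' B"
        proof
          fix B' assume B': "B' \<in> Dn"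
          show "f \<alpha>' B' \<le> f \<alpha>' B" using ff[OF B'] ff[OF B(1)] B(2) B' B(3) by auto
        qed
        then show "B \<in> ?N'" using am[OF a'] B by auto
      qed
      have "\<not> (\<exists>B\<in>?N'. i \<notin> B)" using N' by blast
      then have "mdelete ?N' i = (\<lambda>B. B - {i}) ` ?N'" by (simp add: mdelete_def)
      moreover have "mcontract ?N i = (\<lambda>B. B - {i}) ` {B\<in>?N. i \<in> B}" using True by (simp add: mcontract_def)
      ultimately show ?thesis using e N' by simp
    next
      case False
      obtain B0 where B0: "B0 \<in> ?N" using Mne[OF a] by blast
      have B0m: "B0 \<in> Dn" "\<forall>B'\<in>Dn. f \<alpha> B' \<le> f \<alpha> B0" "i \<notin> B0" using B0 am[OF a] False by auto
      have bound: "f \<alpha>' B' \<le> f \<alpha> B0" if B': "B' \<in> Dn" for B'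
      proof (cases "i \<in> B'")
        case True
        then have "B' \<notin> ?N" using False by blast
        then obtain B'' where "B'' \<in> Dn" "f \<alpha> B' < f \<alpha> B''" using am[OF a] B' by fastforce
        then have "f \<alpha> B' < f \<alpha> B0" using B0m by fastforce
        then show ?thesis using ff[OF B'] True by simp
      next
        case False
        then show ?thesis using ff[OF B'] B0m B' by simp
      qed
      have B0': "B0 \<in> ?N'" using am[OF a'] B0m bound ff[OF B0m(1)] by auto
      have N': "{B\<in>?N'. i \<notin> B} = ?N"
      proof (intro set_eqI iffI)
        fix B assume "B \<in> {B\<in>?N'. i \<notin> B}"
        then have B: "B \<in> Dn" "\<forall>B'\<in>Dn. f \<alpha>' B' \<le> f \<alpha>' B" "i \<notin> B" using am[OF a'] by auto
        have "f \<alpha>' B0 \<le> f \<alpha>' B" using B B0m by blast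
        then have "f \<alpha> B0 \<le> f \<alpha> B" using ff[OF B0m(1)] ff[OF B(1)] B(3) B0m(3) by simp
        then show "B \<in> ?N" using am[OF a] B B0m by fastforce
      next
        fix B assume BN: "B \<in> ?N"
        then have B: "B \<in> Dn" "\<forall>B'\<in>Dn. f \<alpha> B' \<le> f \<alpha> B" "i \<notin> B" using am[OF a] False by auto
        have "f \<alpha> B = f \<alpha> B0" using B B0m by (meson antisym)
        then have "\<forall>B'\<in>Dn. f \<alpha>' B' \<le> f \<alpha>' B" using bound ff[OF B(1)] B(3) by simp
        then show "B \<in> {B\<in>?N'. i \<notin> B}" using am[OF a'] B by auto
      qed
      have "mdelete ?N' i = {B\<in>?N'. i \<notin> B}" using B0' B0m(3) by (auto simp: mdelete_def)
      moreover have "mcontract ?N i = ?N" using False by (simp add: mcontract_def)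
      ultimately show ?thesis using e N' by simp
    qed
  qed
  have mf2: "M \<alpha> = M (\<lambda>x. \<alpha> x + unitvec E x)" if a: "\<alpha> \<in> zvec E" for \<alpha>
  proof -
    define \<alpha>'' where "\<alpha>'' = (\<lambda>x. \<alpha> x + unitvec E x)"
    have a'': "\<alpha>'' \<in> zvec E" using a unfolding \<alpha>''_def zvec_def unitvec_def by auto
    have ff: "f \<alpha>'' B = f \<alpha> B + int d" if "B \<in> Dn" for B
    proof -
      have "(\<Sum>x\<in>B. \<alpha>'' x) = (\<Sum>x\<in>B. \<alpha> x) + (\<Sum>x\<in>B. unitvec E x)" unfolding \<alpha>''_def by (simp add: sum.distrib)
      moreover have "(\<Sum>x\<in>B. unitvec E x) = (\<Sum>x\<in>B. 1)"
        by (rule sum.cong) (use Dfin(2)[OF that] in \<open>auto simp: unitvec_def\<close>)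
      ultimately show ?thesis using Dfin[OF that] unfolding f_def by simp
    qed
    have "M \<alpha>'' = M \<alpha>" using am[OF a''] am[OF a] ff by auto
    then show ?thesis unfolding \<alpha>''_def by simp
  qed
  show ?thesis unfolding matroid_flock_def using mat mf1 mf2 by blast
qed

theorem mainTheorem1:
  fixes E :: "'a set" and d :: nat and M :: "('a \<Rightarrow> int) \<Rightarrow> 'a set set"
  assumes "finite E"
    and "\<forall>\<alpha>\<in>zvec E. matroid_of_rank E d (M \<alpha>)"
  shows "matroid_flock E d M \<longleftrightarrow>
    (\<exists>\<nu> :: 'a set \<Rightarrow> ereal.
       matroid_valuation E d \<nu> \<and>
       (\<forall>B\<in>dsubsets E d. \<nu> B = \<infinity> \<or> (\<exists>z::int. \<nu> B = ereal (of_int z))) \<and>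
       (\<forall>\<alpha>\<in>zvec E. M \<alpha> = val_bases E d \<nu> (\<lambda>i. real_of_int (\<alpha> i))))"
proof
  assume mf: "matroid_flock E d M"
  interpret flk E d M
  proof
    show "finite E" using assms(1) .
    show "\<And>\<alpha>. \<alpha> \<in> zvec E \<Longrightarrow> matroid_of_rank E d (M \<alpha>)" using assms(2) by blast
    show "\<And>\<alpha> i. \<alpha> \<in> zvec E \<Longrightarrow> i \<in> E \<Longrightarrow> mcontract (M \<alpha>) i = mdelete (M (\<alpha>(i := \<alpha> i + 1))) i"
      using mf unfolding matroid_flock_def plus_unit by blast
  qed
  show "\<exists>\<nu> :: 'a set \<Rightarrow> ereal.
       matroid_valuation E d \<nu> \<and>
       (\<forall>B\<in>dsubsets E d. \<nu> B = \<infinity> \<or> (\<exists>z::int. \<nu> B = ereal (of_int z))) \<and>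
       (\<forall>\<alpha>\<in>zvec E. M \<alpha> = val_bases E d \<nu> (\<lambda>i. real_of_int (\<alpha> i)))"
  proof (intro exI conjI)
    show "matroid_valuation E d nu" using nu_val .
    show "\<forall>B\<in>dsubsets E d. nu B = \<infinity> \<or> (\<exists>z::int. nu B = ereal (of_int z))" by (auto simp: nu_def)
    show "\<forall>\<alpha>\<in>zvec E. M \<alpha> = val_bases E d nu (\<lambda>i. real_of_int (\<alpha> i))" using M_vb by blast
  qed
next
  assume "\<exists>\<nu> :: 'a set \<Rightarrow> ereal.
       matroid_valuation E d \<nu> \<and>
       (\<forall>B\<in>dsubsets E d. \<nu> B = \<infinity> \<or> (\<exists>z::int. \<nu> B = ereal (of_int z))) \<and>
       (\<forall>\<alpha>\<in>zvec E. M \<alpha> = val_bases E d \<nu> (\<lambda>i. real_of_int (\<alpha> i)))"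
  then obtain \<nu> :: "'a set \<Rightarrow> ereal" where h: "matroid_valuation E d \<nu>"
    "\<forall>B\<in>dsubsets E d. \<nu> B = \<infinity> \<or> (\<exists>z::int. \<nu> B = ereal (of_int z))"
    "\<forall>\<alpha>\<in>zvec E. M \<alpha> = val_bases E d \<nu> (\<lambda>i. real_of_int (\<alpha> i))" by blast
  show "matroid_flock E d M" using rev_dir[OF assms(1,2) h] .
qed

end
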